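(* Fix the finite sets $S,B$ and the transition function $p$, and identify a game with its payoff function $u\in\mathbb{R}^{2\times S\times B}$. Let a game $G$ be given. (i) If condition B holds for $G$, then every neighborhood of $G$ contains a game $G'$ with $\widehat{E}_{G'}(\mathcal{M})\neq\emptyset$. (ii) If condition B does not hold for $G$, then there is a neighborhood $\mathcal{N}$ of $G$ such that condition B does not hold for any game in $\mathcal{N}$.
   Context: Setting: finite state set $S$, message set $A=S$, finite action set $B$ of the receiver, an irreducible aperiodic Markov chain on $S$ with transition function $p$ and invariant measure $m\in\Delta(S)$; a game is a payoff function $u=(u^1,u^2):S\times B\to\mathbb{R}^2$ (player 1 = sender, player 2 = receiver), extended linearly to mixed actions. $\mathcal{M}\subset\Delta(S\times A)$ is the set of distributions with both marginals equal to $m$; $\mu_0(s,s)=m(s)$, $\mu_0(s,a)=0$ for $s\ne a$. For $\mu\in\mathcal{M}$ and $y:A\to\Delta(B)$, $U(\mu,y)=\sum_{s,a}\mu(s,a)u(s,y(\cdot\mid a))$, and $v^2=\max_{b\in B}\sum_s m(s)u^2(s,b)$ (all computed with the payoff function of the game under consideration). Conditions on $y$: (C1) $U^1(\mu_0,y)\ge U^1(\mu,y)$ for all $\mu\in\mathcal{M}$; (C2) $U^2(\mu_0,y)\ge v^2$; (D1) $U^1(\mu_0,y)>U^1(\mu,y)$ for all $\mu\in\mathcal{M}$, $\mu\ne\mu_0$; (D2) $U^2(\mu_0,y)>v^2$. $\widehat{E}_{G}(\mathcal{M})$ is the set of vectors $U(\mu_0,y)$ with $y$ satisfying (D1),(D2)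 in game $G$. Condition B for a game: there is a non-constant map $y:S\to\Delta(B)$ satisfying (C1) and (C2) in that game. *)

theory Defs
  imports "HOL-Analysis.Analysis"
begin

text \<open>The set of games carries the product
  topology (Function_Topology), which for finite S, B is the Euclidean topology
  of R^(2 x S x B).\<close>

type_synonym ('s,'b) game = "'s \<Rightarrow> 'b \<Rightarrow> real \<times> real"

definition is_distr :: "('a::finite \<Rightarrow> real) \<Rightarrow> bool" where
  "is_distr q \<longleftrightarrow> (\<forall>x. q x \<ge> 0) \<and> (\<Sum>x\<in>UNIV. q x) = 1"

definition stochastic :: "('s::finite \<Rightarrow> 's \<Rightarrow> real) \<Rightarrow> bool" where
  "stochastic p \<longleftrightarrow> (\<forall>s. is_distr (p s))"

fun tpow :: "('s::finite \<Rightarrow> 's \<Rightarrow> real) \<Rightarrow> nat \<Rightarrow> 's \<Rightarrow> 's \<Rightarrow> real" where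
  "tpow p 0 s t = (if s = t then 1 else 0)"
| "tpow p (Suc n) s t = (\<Sum>r\<in>UNIV. tpow p n s r * p r t)"

definition irreducible_chain :: "('s::finite \<Rightarrow> 's \<Rightarrow> real) \<Rightarrow> bool" where
  "irreducible_chain p \<longleftrightarrow> (\<forall>s t. \<exists>n>0. tpow p n s t > 0)"

definition aperiodic_chain :: "('s::finite \<Rightarrow> 's \<Rightarrow> real) \<Rightarrow> bool" where
  "aperiodic_chain p \<longleftrightarrow> (\<forall>s. Gcd {n. n > 0 \<and> tpow p n s s > 0} = 1)"

definition invariant_measure :: "('s::finite \<Rightarrow> 's \<Rightarrow> real) \<Rightarrow> ('s \<Rightarrow> real) \<Rightarrow> bool" where
  "invariant_measure p m \<longleftrightarrow> is_distr m \<and> (\<forall>t. (\<Sum>s\<in>UNIV. m s * p s t) = m t)"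

text \<open>The set M: distributions on S x A (A = S) with both marginals equal to m.\<close>
definition Mset :: "('s::finite \<Rightarrow> real) \<Rightarrow> ('s \<Rightarrow> 's \<Rightarrow> real) set" where
  "Mset m = {\<mu>. (\<forall>s a. \<mu> s a \<ge> 0) \<and> (\<Sum>s\<in>UNIV. \<Sum>a\<in>UNIV. \<mu> s a) = 1
               \<and> (\<forall>s. (\<Sum>a\<in>UNIV. \<mu> s a) = m s) \<and> (\<forall>a. (\<Sum>s\<in>UNIV. \<mu> s a) = m a)}"

definition mu0 :: "('s::finite \<Rightarrow> real) \<Rightarrow> 's \<Rightarrow> 's \<Rightarrow> real" where
  "mu0 m s a = (if s = a then m s else 0)"

definition is_strategy :: "('s \<Rightarrow> 'b::finite \<Rightarrow> real) \<Rightarrow> bool" where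
  "is_strategy y \<longleftrightarrow> (\<forall>a. is_distr (y a))"

definition mixed_payoff :: "('s,'b::finite) game \<Rightarrow> 's \<Rightarrow> ('b \<Rightarrow> real) \<Rightarrow> real \<times> real" where
  "mixed_payoff u s q = (\<Sum>b\<in>UNIV. q b *\<^sub>R u s b)"

definition Upay :: "('s::finite,'b::finite) game \<Rightarrow> ('s \<Rightarrow> 's \<Rightarrow> real) \<Rightarrow> ('s \<Rightarrow> 'b \<Rightarrow> real) \<Rightarrow> real \<times> real" where
  "Upay u \<mu> y = (\<Sum>s\<in>UNIV. \<Sum>a\<in>UNIV. \<mu> s a *\<^sub>R mixed_payoff u s (y a))"

definition v2 :: "('s::finite,'b::finite) game \<Rightarrow> ('s \<Rightarrow> real) \<Rightarrow> real" where
  "v2 u m = Max (range (\<lambda>b. \<Sum>s\<in>UNIV. m s * snd (u s b)))"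

definition C1 :: "('s::finite,'b::finite) game \<Rightarrow> ('s \<Rightarrow> real) \<Rightarrow> ('s \<Rightarrow> 'b \<Rightarrow> real) \<Rightarrow> bool" where
  "C1 u m y \<longleftrightarrow> (\<forall>\<mu>\<in>Mset m. fst (Upay u (mu0 m) y) \<ge> fst (Upay u \<mu> y))"

definition C2 :: "('s::finite,'b::finite) game \<Rightarrow> ('s \<Rightarrow> real) \<Rightarrow> ('s \<Rightarrow> 'b \<Rightarrow> real) \<Rightarrow> bool" where
  "C2 u m y \<longleftrightarrow> snd (Upay u (mu0 m) y) \<ge> v2 u m"

definition D1 :: "('s::finite,'b::finite) game \<Rightarrow> ('s \<Rightarrow> real) \<Rightarrow> ('s \<Rightarrow> 'b \<Rightarrow> real) \<Rightarrow> bool" where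
  "D1 u m y \<longleftrightarrow> (\<forall>\<mu>\<in>Mset m. \<mu> \<noteq> mu0 m \<longrightarrow> fst (Upay u (mu0 m) y) > fst (Upay u \<mu> y))"

definition D2 :: "('s::finite,'b::finite) game \<Rightarrow> ('s \<Rightarrow> real) \<Rightarrow> ('s \<Rightarrow> 'b \<Rightarrow> real) \<Rightarrow> bool" where
  "D2 u m y \<longleftrightarrow> snd (Upay u (mu0 m) y) > v2 u m"

definition Ehat :: "('s::finite,'b::finite) game \<Rightarrow> ('s \<Rightarrow> real) \<Rightarrow> (real \<times> real) set" where
  "Ehat u m = {Upay u (mu0 m) y | y. is_strategy y \<and> D1 u m y \<and> D2 u m y}"

definition conditionB :: "('s::finite,'b::finite) game \<Rightarrow> ('s \<Rightarrow> real) \<Rightarrow> bool" where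
  "conditionB u m \<longleftrightarrow> (\<exists>y. is_strategy y \<and> (\<exists>s t. y s \<noteq> y t) \<and> C1 u m y \<and> C2 u m y)"

end

theory Submission
  imports Defs
begin

lemma nbhd_game:
  fixes G :: "('s::finite,'b::finite) game"
  assumes "open N" "G \<in> N"
  shows "\<exists>r>0. \<forall>G'. (\<forall>s b. \<bar>fst (G' s b) - fst (G s b)\<bar> < r \<and> \<bar>snd (G' s b) - snd (G s b)\<bar> < r) \<longrightarrow> G' \<in> N"
proof -
  define \<Phi> :: "real^('s\<times>'b\<times>bool) \<Rightarrow> ('s,'b) game" where
    "\<Phi> x = (\<lambda>s b. G s b + (x$(s,b,True), x$(s,b,False)))" for x
  have "continuous_on UNIV \<Phi>"
    unfolding \<Phi>_def
    by (intro continuous_on_coordinatewise_then_product continuous_intros continuous_on_component continuous_on_id)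
  then have "open (\<Phi> -` N)" using assms(1) by (simp add: open_vimage)
  moreover have "0 \<in> \<Phi> -` N" using assms(2) by (simp add: \<Phi>_def zero_prod_def[symmetric])
  ultimately obtain e where e: "e > 0" "ball 0 e \<subseteq> \<Phi> -` N" by (meson openE)
  define r where "r = e / (real CARD('s\<times>'b\<times>bool))"
  have cpos: "real CARD('s\<times>'b\<times>bool) > 0" by simp
  have rpos: "r > 0" using e cpos by (simp add: r_def)
  show ?thesis
  proof (intro exI[of _ r] conjI allI impI rpos)
    fix G' :: "('s,'b) game"
    assume H: "\<forall>s b. \<bar>fst (G' s b) - fst (G s b)\<bar> < r \<and> \<bar>snd (G' s b) - snd (G s b)\<bar> < r"
    define x :: "real^('s\<times>'b\<times>bool)" where
      "x = (\<chi> i. case i of (s,b,c) \<Rightarrow> if c then fst (G' s b) - fst (G s b) else snd (G' s b) - snd (G s b))"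
    have xi: "\<bar>x$i\<bar> < r" for i
      using H by (cases i) (auto simp: x_def)
    have "norm x \<le> (\<Sum>i\<in>UNIV. \<bar>x$i\<bar>)" by (rule norm_le_l1_cart)
    also have "\<dots> < (\<Sum>i\<in>(UNIV::('s\<times>'b\<times>bool) set). r)"
      by (rule sum_strict_mono) (auto simp: xi)
    also have "\<dots> = e" using cpos by (simp add: r_def)
    finally have "x \<in> ball 0 e" by simp
    with e have "\<Phi> x \<in> N" by auto
    moreover have "\<Phi> x = G'" by (auto simp: \<Phi>_def x_def fun_eq_iff prod_eq_iff)
    ultimately show "G' \<in> N" by simp
  qed
qed
lemma open_box_game:
  fixes G :: "('s::finite,'b::finite) game"
  shows "open {G'. \<forall>s b. \<bar>fst (G' s b) - fst (G s b)\<bar> < r \<and> \<bar>snd (G' s b) - snd (G s b)\<bar> < r}"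
proof -
  have c: "continuous_on UNIV (\<lambda>G'::('s,'b) game. G' s b)" for s b
    by (rule continuous_on_product_then_coordinatewise, rule continuous_on_product_coordinates)
  have o1: "open {G'::('s,'b) game. \<bar>fst (G' s b) - fst (G s b)\<bar> < r}" for s b
    by (rule open_Collect_less) (intro continuous_on_rabs continuous_on_diff continuous_on_fst[OF c] continuous_on_const)+
  have o2: "open {G'::('s,'b) game. \<bar>snd (G' s b) - snd (G s b)\<bar> < r}" for s b
    by (rule open_Collect_less) (intro continuous_on_rabs continuous_on_diff continuous_on_snd[OF c] continuous_on_const)+
  have eq: "{G'::('s,'b) game. \<forall>s b. \<bar>fst (G' s b) - fst (G s b)\<bar> < r \<and> \<bar>snd (G' s b) - snd (G s b)\<bar> < r}
     = (\<Inter>s. \<Inter>b. {G'. \<bar>fst (G' s b) - fst (G s b)\<bar> < r} \<inter> {G'. \<bar>snd (G' s b) - snd (G s b)\<bar> < r})"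
    by auto
  show ?thesis unfolding eq
    by (intro open_INT open_Int o1 o2 ballI) simp_all
qed
definition gapf :: "('s::finite,'b::finite) game \<Rightarrow> ('s\<Rightarrow>'s\<Rightarrow>real) \<Rightarrow> ('s\<Rightarrow>'b\<Rightarrow>real) \<Rightarrow> real" where
  "gapf u \<mu> y = (\<Sum>s\<in>UNIV. \<Sum>a\<in>UNIV. \<mu> s a * (\<Sum>b\<in>UNIV. (y s b - y a b) * fst (u s b)))"

definition c2f :: "('s::finite,'b::finite) game \<Rightarrow> ('s\<Rightarrow>real) \<Rightarrow> ('s\<Rightarrow>'b\<Rightarrow>real) \<Rightarrow> real" where
  "c2f u m y = (\<Sum>s\<in>UNIV. m s * (\<Sum>b\<in>UNIV. y s b * snd (u s b)))"

definition wpay :: "('s::finite,'b::finite) game \<Rightarrow> ('s\<Rightarrow>real) \<Rightarrow> 'b \<Rightarrow> real" where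
  "wpay u m b = (\<Sum>s\<in>UNIV. m s * snd (u s b))"

lemma fst_Upay: "fst (Upay u \<mu> y) = (\<Sum>s\<in>UNIV. \<Sum>a\<in>UNIV. \<mu> s a * (\<Sum>b\<in>UNIV. y a b * fst (u s b)))"
  by (simp add: Upay_def mixed_payoff_def fst_sum)

lemma snd_Upay: "snd (Upay u \<mu> y) = (\<Sum>s\<in>UNIV. \<Sum>a\<in>UNIV. \<mu> s a * (\<Sum>b\<in>UNIV. y a b * snd (u s b)))"
  by (simp add: Upay_def mixed_payoff_def snd_sum)

lemma sum_mu0: "(\<Sum>a\<in>UNIV. mu0 m s a * F a) = m s * F s"
proof -
  have "(\<Sum>a\<in>UNIV. mu0 m s a * F a) = (\<Sum>a\<in>UNIV. if s = a then m s * F s else 0)"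
    by (rule sum.cong) (auto simp: mu0_def)
  then show ?thesis by simp
qed

lemma fst_Upay_mu0: "fst (Upay u (mu0 m) y) = (\<Sum>s\<in>UNIV. m s * (\<Sum>b\<in>UNIV. y s b * fst (u s b)))"
  by (simp add: fst_Upay sum_mu0)

lemma snd_Upay_mu0: "snd (Upay u (mu0 m) y) = c2f u m y"
  by (simp add: snd_Upay sum_mu0 c2f_def)

lemma gap_eq:
  assumes "\<mu> \<in> Mset m"
  shows "fst (Upay u (mu0 m) y) - fst (Upay u \<mu> y) = gapf u \<mu> y"
proof -
  have row: "(\<Sum>a\<in>UNIV. \<mu> s a) = m s" for s using assms by (simp add: Mset_def)
  have "gapf u \<mu> y = (\<Sum>s\<in>UNIV. \<Sum>a\<in>UNIV. \<mu> s a * (\<Sum>b\<in>UNIV. y s b * fst (u s b)))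
        - (\<Sum>s\<in>UNIV. \<Sum>a\<in>UNIV. \<mu> s a * (\<Sum>b\<in>UNIV. y a b * fst (u s b)))"
    by (simp add: gapf_def left_diff_distrib right_diff_distrib sum_subtractf)
  also have "(\<Sum>s\<in>UNIV. \<Sum>a\<in>UNIV. \<mu> s a * (\<Sum>b\<in>UNIV. y s b * fst (u s b)))
      = (\<Sum>s\<in>UNIV. m s * (\<Sum>b\<in>UNIV. y s b * fst (u s b)))"
    by (simp add: sum_distrib_right[symmetric] row)
  finally show ?thesis unfolding fst_Upay_mu0 by (simp add: fst_Upay)
qed

lemma v2_eq: "v2 u m = Max (range (wpay u m))"
  by (simp add: v2_def wpay_def)

lemma wpay_le_v2: "wpay u m b \<le> v2 u m"
  by (simp add: v2_eq)

lemma v2_attained: "\<exists>b. wpay u m b = v2 u m"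
proof -
  have "v2 u m \<in> range (wpay u m)" unfolding v2_eq by (rule Max_in) auto
  then show ?thesis by auto
qed

lemma tpow_nonneg: "stochastic p \<Longrightarrow> tpow p n s t \<ge> 0"
  by (induction n arbitrary: t) (auto simp: stochastic_def is_distr_def intro!: sum_nonneg mult_nonneg_nonneg)

lemma tpow_inv: "invariant_measure p m \<Longrightarrow> (\<Sum>s\<in>UNIV. m s * tpow p n s t) = m t"
proof (induction n arbitrary: t)
  case 0 then show ?case by (simp add: if_distrib sum.delta cong: if_cong)
next
  case (Suc n)
  have "(\<Sum>s\<in>UNIV. m s * tpow p (Suc n) s t) = (\<Sum>r\<in>UNIV. (\<Sum>s\<in>UNIV. m s * tpow p n s r) * p r t)"
  proof -
    have "(\<Sum>s\<in>UNIV. m s * tpow p (Suc n) s t) = (\<Sum>s\<in>UNIV. \<Sum>r\<in>UNIV. m s * tpow p n s r * p r t)"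
      by (simp add: sum_distrib_left mult.assoc)
    also have "\<dots> = (\<Sum>r\<in>UNIV. \<Sum>s\<in>UNIV. m s * tpow p n s r * p r t)"
      by (rule sum.swap)
    also have "\<dots> = (\<Sum>r\<in>UNIV. (\<Sum>s\<in>UNIV. m s * tpow p n s r) * p r t)"
      by (simp add: sum_distrib_right)
    finally show ?thesis .
  qed
  also have "\<dots> = (\<Sum>r\<in>UNIV. m r * p r t)" using Suc by simp
  also have "\<dots> = m t" using Suc.prems by (simp add: invariant_measure_def)
  finally show ?case .
qed

lemma m_pos:
  assumes "stochastic p" "irreducible_chain p" "invariant_measure p m"
  shows "m t > 0"
proof -
  have mn: "m s \<ge> 0" for s using assms(3) by (simp add: invariant_measure_def is_distr_def)
  have "(\<Sum>s\<in>UNIV. m s) = 1" using assms(3) by (simp add: invariant_measure_def is_distr_def)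
  then obtain s0 where s0: "m s0 > 0"
  proof -
    assume h: "(\<Sum>s\<in>UNIV. m s) = 1" and r: "\<And>s0. 0 < m s0 \<Longrightarrow> thesis"
    show thesis
    proof (rule ccontr)
      assume "\<not> thesis"
      then have "\<forall>s. m s \<le> 0" using r by (meson not_le)
      then have "(\<Sum>s\<in>UNIV. m s) \<le> 0" by (simp add: sum_nonpos)
      with h show False by simp
    qed
  qed
  obtain n where n: "n > 0" "tpow p n s0 t > 0" using assms(2) by (auto simp: irreducible_chain_def)
  have "m s0 * tpow p n s0 t \<le> (\<Sum>s\<in>UNIV. m s * tpow p n s t)"
    by (rule member_le_sum) (simp_all add: mn tpow_nonneg[OF assms(1)])
  also have "\<dots> = m t" using tpow_inv[OF assms(3)] .
  finally have le: "m s0 * tpow p n s0 t \<le> m t" .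
  have "0 < m s0 * tpow p n s0 t" using s0 n(2) by (rule mult_pos_pos)
  with le show ?thesis by linarith
qed
lemma swap_weighted:
  fixes c :: "'b::finite \<Rightarrow> real" and m :: "'s::finite \<Rightarrow> real"
  shows "(\<Sum>b\<in>UNIV. c b * (\<Sum>s\<in>UNIV. m s * f s b)) = (\<Sum>s\<in>UNIV. m s * (\<Sum>b\<in>UNIV. c b * f s b))"
proof -
  have "(\<Sum>b\<in>UNIV. c b * (\<Sum>s\<in>UNIV. m s * f s b)) = (\<Sum>b\<in>UNIV. \<Sum>s\<in>UNIV. m s * (c b * f s b))"
    by (simp add: sum_distrib_left mult.left_commute)
  also have "\<dots> = (\<Sum>s\<in>UNIV. \<Sum>b\<in>UNIV. m s * (c b * f s b))" by (rule sum.swap)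
  also have "\<dots> = (\<Sum>s\<in>UNIV. m s * (\<Sum>b\<in>UNIV. c b * f s b))" by (simp add: sum_distrib_left)
  finally show ?thesis .
qed

lemma gapf_diff_only:
  assumes "\<And>s a b. h s b - h a b = (y s b - y a b) / N"
  shows "gapf u \<mu> h = gapf u \<mu> y / N"
  by (simp add: gapf_def assms sum_divide_distrib[symmetric] times_divide_eq_left)

lemma normalize:
  fixes u :: "('s::finite,'b::finite) game" and y :: "'s \<Rightarrow> 'b \<Rightarrow> real"
  assumes mn: "\<And>s. m s \<ge> 0" and msum: "(\<Sum>s\<in>UNIV. m s) = 1"
    and ys: "is_strategy y" and nc: "y s0 \<noteq> y t0" and c1: "C1 u m y" and c2: "C2 u m y"
    and bs: "bs \<in> A"
  defines "ybar \<equiv> (\<lambda>b. \<Sum>t\<in>UNIV. m t * y t b)"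
  defines "Nn \<equiv> (\<Sum>s\<in>UNIV. \<Sum>t\<in>UNIV. \<Sum>b\<in>UNIV. \<bar>y s b - y t b\<bar>)"
  defines "T \<equiv> (\<Sum>b\<in>UNIV. if b \<in> A then 0 else ybar b)"
  defines "ch \<equiv> (\<lambda>b. (if b = bs then - T / Nn else 0) + (if b \<in> A then 0 else ybar b / Nn))"
  defines "h \<equiv> (\<lambda>s b. (y s b - ybar b) / Nn + ch b)"
  shows "Nn > 0"
    and "\<And>s. (\<Sum>b\<in>UNIV. h s b) = 0"
    and "\<And>s b. b \<notin> A \<Longrightarrow> h s b \<ge> 0"
    and "\<And>\<mu>. \<mu> \<in> Mset m \<Longrightarrow> gapf u \<mu> h \<ge> 0"
    and "c2f u m h \<ge> 0"
    and "(\<Sum>s\<in>UNIV. \<Sum>t\<in>UNIV. \<Sum>b\<in>UNIV. \<bar>h s b - h t b\<bar>) = 1"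
    and "\<And>s b. \<bar>(y s b - ybar b) / Nn\<bar> \<le> 1"
    and "\<And>b. ybar b * (v2 u m - wpay u m b) \<le> Nn * (\<Sum>s\<in>UNIV. m s * (\<Sum>b\<in>UNIV. \<bar>snd (u s b)\<bar>))"
    and "\<And>b. ybar b \<ge> 0"
    and "\<And>s b. h s b = (if b \<in> A then (y s b - ybar b) / Nn + (if b = bs then - T / Nn else 0) else y s b / Nn)"
    and "T = (\<Sum>b\<in>UNIV. if b \<in> A then 0 else ybar b)"
proof -
  have y0: "y s b \<ge> 0" for s b using ys by (simp add: is_strategy_def is_distr_def)
  have y1: "(\<Sum>b\<in>UNIV. y s b) = 1" for s using ys by (simp add: is_strategy_def is_distr_def)
  have dle: "\<bar>y s b - y t b\<bar> \<le> Nn" for s t b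
  proof -
    have "\<bar>y s b - y t b\<bar> \<le> (\<Sum>b\<in>UNIV. \<bar>y s b - y t b\<bar>)" by (rule member_le_sum) auto
    also have "\<dots> \<le> (\<Sum>t\<in>UNIV. \<Sum>b\<in>UNIV. \<bar>y s b - y t b\<bar>)"
      by (rule member_le_sum[where f="\<lambda>t. \<Sum>b\<in>UNIV. \<bar>y s b - y t b\<bar>"]) (auto intro: sum_nonneg)
    also have "\<dots> \<le> Nn" unfolding Nn_def
      by (rule member_le_sum[where f="\<lambda>s. \<Sum>t\<in>UNIV. \<Sum>b\<in>UNIV. \<bar>y s b - y t b\<bar>"]) (auto intro: sum_nonneg)
    finally show ?thesis .
  qed
  obtain b0 where b0: "y s0 b0 \<noteq> y t0 b0" using nc by auto
  have "0 < \<bar>y s0 b0 - y t0 b0\<bar>" using b0 by simp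
  then show Npos: "Nn > 0" using dle[of s0 b0 t0] by linarith
  show hform: "h s b = (if b \<in> A then (y s b - ybar b) / Nn + (if b = bs then - T / Nn else 0) else y s b / Nn)" for s b
    using bs by (auto simp: h_def ch_def diff_divide_distrib)
  show "T = (\<Sum>b\<in>UNIV. if b \<in> A then 0 else ybar b)" by (simp add: T_def)
  show ybar0: "ybar b \<ge> 0" for b unfolding ybar_def by (intro sum_nonneg mult_nonneg_nonneg mn y0)
  have ybar1: "(\<Sum>b\<in>UNIV. ybar b) = 1"
  proof -
    have "(\<Sum>b\<in>UNIV. ybar b) = (\<Sum>t\<in>UNIV. m t * (\<Sum>b\<in>UNIV. y t b))"
      unfolding ybar_def using swap_weighted[of "\<lambda>_. 1" m y] by simp
    also have "\<dots> = 1" by (simp add: y1 msum)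
    finally show ?thesis .
  qed
  have chsum: "(\<Sum>b\<in>UNIV. ch b) = 0"
  proof -
    have "(\<Sum>b\<in>UNIV. ch b) = (\<Sum>b\<in>UNIV. (if b = bs then - T / Nn else 0)) + (\<Sum>b\<in>UNIV. (if b \<in> A then 0 else ybar b / Nn))"
      unfolding ch_def by (rule sum.distrib)
    also have "(\<Sum>b\<in>UNIV. (if b \<in> A then 0 else ybar b / Nn)) = T / Nn"
      unfolding T_def sum_divide_distrib by (rule sum.cong) auto
    finally show ?thesis by simp
  qed
  show "(\<Sum>b\<in>UNIV. h s b) = 0" for s
  proof -
    have "(\<Sum>b\<in>UNIV. h s b) = (\<Sum>b\<in>UNIV. y s b - ybar b) / Nn + (\<Sum>b\<in>UNIV. ch b)"
      unfolding h_def by (simp add: sum.distrib sum_divide_distrib)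
    also have "\<dots> = 0" by (simp add: sum_subtractf y1 ybar1 chsum)
    finally show ?thesis .
  qed
  show "b \<notin> A \<Longrightarrow> h s b \<ge> 0" for s b
    using hform[of s b] y0[of s b] Npos by simp
  have hd: "h s b - h a b = (y s b - y a b) / Nn" for s a b
    by (simp add: h_def diff_divide_distrib)
  show "gapf u \<mu> h \<ge> 0" if "\<mu> \<in> Mset m" for \<mu>
  proof -
    have "fst (Upay u \<mu> y) \<le> fst (Upay u (mu0 m) y)" using c1 that by (simp add: C1_def)
    then have "gapf u \<mu> y \<ge> 0" using gap_eq[OF that, of u y] by linarith
    then show ?thesis using gapf_diff_only[of h y Nn u \<mu>, OF hd] Npos by simp
  qed
  show "(\<Sum>s\<in>UNIV. \<Sum>t\<in>UNIV. \<Sum>b\<in>UNIV. \<bar>h s b - h t b\<bar>) = 1"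
    using Npos by (simp add: hd Nn_def[symmetric] sum_divide_distrib[symmetric])
  show "\<bar>(y s b - ybar b) / Nn\<bar> \<le> 1" for s b
  proof -
    have "y s b - ybar b = (\<Sum>t\<in>UNIV. m t * (y s b - y t b))"
      by (simp add: ybar_def right_diff_distrib sum_subtractf sum_distrib_right[symmetric] msum)
    then have "\<bar>y s b - ybar b\<bar> \<le> (\<Sum>t\<in>UNIV. m t * \<bar>y s b - y t b\<bar>)"
      by (metis (no_types, lifting) abs_mult abs_of_nonneg mn sum.cong sum_abs)
    also have "\<dots> \<le> (\<Sum>t\<in>UNIV. m t * Nn)"
      by (intro sum_mono mult_left_mono dle mn)
    also have "\<dots> = Nn" by (simp add: sum_distrib_right[symmetric] msum)
    finally show ?thesis using Npos by simp
  qed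
  define w where "w = wpay u m"
  define Au where "Au = (\<Sum>s\<in>UNIV. m s * (\<Sum>b\<in>UNIV. \<bar>snd (u s b)\<bar>))"
  have key: "c2f u m y - (\<Sum>b\<in>UNIV. ybar b * w b) = (\<Sum>s\<in>UNIV. m s * (\<Sum>b\<in>UNIV. (y s b - ybar b) * snd (u s b)))"
  proof -
    have "(\<Sum>b\<in>UNIV. ybar b * w b) = (\<Sum>s\<in>UNIV. m s * (\<Sum>b\<in>UNIV. ybar b * snd (u s b)))"
      unfolding w_def wpay_def by (rule swap_weighted)
    then show ?thesis
      by (simp add: c2f_def left_diff_distrib sum_subtractf right_diff_distrib)
  qed
  have lowv: "c2f u m y - (\<Sum>b\<in>UNIV. ybar b * w b) \<ge> (\<Sum>b\<in>UNIV. ybar b * (v2 u m - w b))"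
  proof -
    have "c2f u m y \<ge> v2 u m" using c2 by (simp add: C2_def snd_Upay_mu0)
    moreover have "(\<Sum>b\<in>UNIV. ybar b * (v2 u m - w b)) = v2 u m - (\<Sum>b\<in>UNIV. ybar b * w b)"
      by (simp add: right_diff_distrib sum_subtractf sum_distrib_right[symmetric] ybar1)
    ultimately show ?thesis by linarith
  qed
  have upv: "c2f u m y - (\<Sum>b\<in>UNIV. ybar b * w b) \<le> Nn * Au"
  proof -
    have "(\<Sum>s\<in>UNIV. m s * (\<Sum>b\<in>UNIV. (y s b - ybar b) * snd (u s b))) \<le> (\<Sum>s\<in>UNIV. m s * (\<Sum>b\<in>UNIV. Nn * \<bar>snd (u s b)\<bar>))"
    proof (intro sum_mono mult_left_mono mn)
      fix s b
      have "\<bar>y s b - ybar b\<bar> \<le> Nn"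
        using \<open>\<And>s b. \<bar>(y s b - ybar b) / Nn\<bar> \<le> 1\<close>[of s b] Npos by (simp add: divide_le_eq_1)
      then have "\<bar>(y s b - ybar b) * snd (u s b)\<bar> \<le> Nn * \<bar>snd (u s b)\<bar>"
        by (simp add: abs_mult mult_right_mono)
      then show "(y s b - ybar b) * snd (u s b) \<le> Nn * \<bar>snd (u s b)\<bar>" by linarith
    qed
    then show ?thesis unfolding key Au_def
      by (simp add: sum_distrib_left[symmetric] mult.left_commute)
  qed
  have wle: "w b \<le> v2 u m" for b unfolding w_def by (rule wpay_le_v2)
  show "ybar b * (v2 u m - wpay u m b) \<le> Nn * Au" for b
  proof -
    have "ybar b * (v2 u m - w b) \<le> (\<Sum>b\<in>UNIV. ybar b * (v2 u m - w b))"
      by (rule member_le_sum) (auto intro!: mult_nonneg_nonneg ybar0 simp: wle)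
    then show ?thesis using lowv upv unfolding w_def by linarith
  qed
  show "c2f u m h \<ge> 0"
  proof -
    have "c2f u m h = (c2f u m y - (\<Sum>b\<in>UNIV. ybar b * w b)) / Nn + (\<Sum>b\<in>UNIV. ch b * w b)"
    proof -
      have "c2f u m h = (\<Sum>s\<in>UNIV. m s * (\<Sum>b\<in>UNIV. (y s b - ybar b) * snd (u s b))) / Nn
              + (\<Sum>s\<in>UNIV. m s * (\<Sum>b\<in>UNIV. ch b * snd (u s b)))"
        unfolding c2f_def h_def
        apply (simp add: distrib_right sum.distrib distrib_left sum_divide_distrib)
        by (rule sum.cong) (simp_all add: sum_divide_distrib[symmetric])
      also have "(\<Sum>s\<in>UNIV. m s * (\<Sum>b\<in>UNIV. ch b * snd (u s b))) = (\<Sum>b\<in>UNIV. ch b * w b)"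
        unfolding w_def wpay_def by (rule swap_weighted[symmetric])
      finally show ?thesis using key by simp
    qed
    moreover have "(\<Sum>b\<in>UNIV. ch b * w b) = (\<Sum>b\<in>UNIV. (if b \<in> A then 0 else ybar b * (w b - w bs))) / Nn"
    proof -
      have "(\<Sum>b\<in>UNIV. ch b * w b) = - T / Nn * w bs + (\<Sum>b\<in>UNIV. (if b \<in> A then 0 else ybar b * w b)) / Nn"
        unfolding ch_def apply (simp add: distrib_right sum.distrib if_distrib[where f="\<lambda>x. x * w _"] sum_divide_distrib cong: if_cong)
        by (rule sum.cong) auto
      also have "\<dots> = (\<Sum>b\<in>UNIV. (if b \<in> A then 0 else ybar b * (w b - w bs))) / Nn"
        unfolding T_def
        apply (simp add: right_diff_distrib if_distrib[where f="\<lambda>x. x * w bs"] sum_subtractf[symmetric] sum_distrib_right diff_divide_distrib cong: if_cong)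
        apply (simp add: diff_divide_distrib[symmetric] sum_subtractf[symmetric])
        by (rule disjI2, rule sum.cong) auto
      finally show ?thesis .
    qed
    ultimately have "Nn * c2f u m h = (c2f u m y - (\<Sum>b\<in>UNIV. ybar b * w b)) + (\<Sum>b\<in>UNIV. (if b \<in> A then 0 else ybar b * (w b - w bs)))"
      using Npos by (simp add: distrib_left)
    also have "\<dots> \<ge> (\<Sum>b\<in>UNIV. ybar b * (v2 u m - w b)) + (\<Sum>b\<in>UNIV. (if b \<in> A then 0 else ybar b * (w b - w bs)))"
      using lowv by linarith
    also have "(\<Sum>b\<in>UNIV. ybar b * (v2 u m - w b)) + (\<Sum>b\<in>UNIV. (if b \<in> A then 0 else ybar b * (w b - w bs)))
        = (\<Sum>b\<in>UNIV. ybar b * (v2 u m - (if b \<in> A then w b else w bs)))"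
      by (simp only: sum.distrib[symmetric]) (rule sum.cong, auto simp: algebra_simps)
    also have "\<dots> \<ge> 0"
      by (intro sum_nonneg mult_nonneg_nonneg ybar0) (simp add: wle)
    finally have "Nn * c2f u m h \<ge> 0" .
    then show ?thesis using Npos by (simp add: zero_le_mult_iff)
  qed
qed
lemma sum_if_const: "(\<Sum>b\<in>(UNIV::'b::finite set). if b \<in> A then c else 0) = real (card A) * c"
  by (simp add: sum.If_cases)

lemma box_conv:
  fixes f :: "nat \<Rightarrow> real"
  assumes "\<And>k. \<bar>f k - c\<bar> < 1 / real (Suc k)"
  shows "f \<longlonglongrightarrow> c"
proof -
  have "(\<lambda>k. f k - c) \<longlonglongrightarrow> 0"
  proof (rule Lim_null_comparison[where g="\<lambda>k. inverse (real (Suc k))"])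
    show "\<forall>\<^sub>F k in sequentially. norm (f k - c) \<le> inverse (real (Suc k))"
      by (rule always_eventually) (metis assms divide_inverse less_imp_le mult_1 real_norm_def)
  qed (rule LIMSEQ_inverse_real_of_nat)
  from tendsto_add[OF this tendsto_const[of c]] show ?thesis by simp
qed

lemma construct_B:
  fixes G :: "('s::finite,'b::finite) game" and hl :: "'s \<Rightarrow> 'b \<Rightarrow> real"
  assumes bsA: "bs \<in> A" and Adef: "A = {b. wpay G m b = v2 G m}"
    and L1: "\<And>s. (\<Sum>b\<in>UNIV. hl s b) = 0"
    and L2: "\<And>s b. b \<notin> A \<Longrightarrow> hl s b \<ge> 0"
    and L3: "\<And>\<mu>. \<mu> \<in> Mset m \<Longrightarrow> gapf G \<mu> hl \<ge> 0"
    and L4: "c2f G m hl \<ge> 0"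
    and L5: "hl s0 b0 \<noteq> hl t0 b0"
  shows "conditionB G m"
proof -
  define cA where "cA = real (card A)"
  have cApos: "cA > 0" using bsA unfolding cA_def by (simp add: card_gt_0_iff) blast
  define R where "R = (\<Sum>s\<in>UNIV. \<Sum>b\<in>UNIV. \<bar>hl s b\<bar>)"
  have hR: "\<bar>hl s b\<bar> \<le> R" for s b
  proof -
    have "\<bar>hl s b\<bar> \<le> (\<Sum>b\<in>UNIV. \<bar>hl s b\<bar>)" by (rule member_le_sum) auto
    also have "\<dots> \<le> R" unfolding R_def
      by (rule member_le_sum[where f="\<lambda>s. \<Sum>b\<in>UNIV. \<bar>hl s b\<bar>"]) (auto intro: sum_nonneg)
    finally show ?thesis .
  qed
  have R0: "R \<ge> 0" unfolding R_def by (intro sum_nonneg) auto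
  define t where "t = 1 / (cA * (R + 1))"
  have tpos: "t > 0" using cApos R0 by (simp add: t_def)
  define q where "q = (\<lambda>b. if b \<in> A then 1 / cA else 0)"
  define yG where "yG = (\<lambda>s b. q b + t * hl s b)"
  have "is_strategy yG"
    unfolding is_strategy_def is_distr_def
  proof (intro allI conjI)
    fix s b
    show "yG s b \<ge> 0"
    proof (cases "b \<in> A")
      case True
      have "t * \<bar>hl s b\<bar> \<le> t * R" using hR tpos by (simp add: mult_left_mono)
      also have "\<dots> < 1 / cA"
      proof -
        have r1: "R / (R + 1) < 1" using R0 by simp
        have "t * R = (R / (R + 1)) * (1 / cA)" by (simp add: t_def)
        also have "\<dots> < 1 * (1 / cA)" by (rule mult_strict_right_mono[OF r1]) (use cApos in simp)
        finally show ?thesis by simp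
      qed
      finally have "t * \<bar>hl s b\<bar> < 1 / cA" .
      moreover have "- (t * \<bar>hl s b\<bar>) \<le> t * hl s b" using tpos
        using mult_left_mono[of "- \<bar>hl s b\<bar>" "hl s b" t] by simp
      ultimately show ?thesis using True by (simp add: yG_def q_def)
    next
      case False
      then show ?thesis using L2[OF False] tpos by (simp add: yG_def q_def)
    qed
  next
    fix s
    have "(\<Sum>b\<in>UNIV. yG s b) = (\<Sum>b\<in>UNIV. q b) + t * (\<Sum>b\<in>UNIV. hl s b)"
      by (simp add: yG_def sum.distrib sum_distrib_left)
    also have "(\<Sum>b\<in>UNIV. q b) = 1" unfolding q_def sum_if_const cA_def[symmetric] using cApos by simp
    finally show "(\<Sum>b\<in>UNIV. yG s b) = 1" by (simp add: L1)
  qed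
  moreover have "\<exists>s t. yG s \<noteq> yG t"
  proof (intro exI notI)
    assume "yG s0 = yG t0"
    then have "yG s0 b0 = yG t0 b0" by simp
    then have "t * hl s0 b0 = t * hl t0 b0" by (simp add: yG_def)
    then show False using tpos L5 by simp
  qed
  moreover have "C1 G m yG"
    unfolding C1_def
  proof
    fix \<mu> assume mu: "\<mu> \<in> Mset m"
    have "gapf G \<mu> yG = gapf G \<mu> hl / (1 / t)"
      by (rule gapf_diff_only) (simp add: yG_def algebra_simps)
    then have "gapf G \<mu> yG \<ge> 0" using L3[OF mu] tpos by simp
    then show "fst (Upay G \<mu> yG) \<le> fst (Upay G (mu0 m) yG)" using gap_eq[OF mu, of G yG] by linarith
  qed
  moreover have "C2 G m yG"
  proof -
    have "c2f G m yG = (\<Sum>s\<in>UNIV. m s * (\<Sum>b\<in>UNIV. q b * snd (G s b))) + t * c2f G m hl"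
      unfolding c2f_def yG_def
      by (simp add: distrib_right sum.distrib distrib_left sum_distrib_left mult_ac)
    also have "(\<Sum>s\<in>UNIV. m s * (\<Sum>b\<in>UNIV. q b * snd (G s b))) = (\<Sum>b\<in>UNIV. q b * wpay G m b)"
      unfolding wpay_def by (rule swap_weighted[symmetric])
    also have "(\<Sum>b\<in>UNIV. q b * wpay G m b) = (\<Sum>b\<in>UNIV. if b \<in> A then v2 G m / cA else 0)"
      by (rule sum.cong) (auto simp: q_def Adef)
    also have "\<dots> = v2 G m" unfolding sum_if_const cA_def[symmetric] using cApos by simp
    finally have "c2f G m yG \<ge> v2 G m" using L4 tpos by simp
    then show ?thesis by (simp add: C2_def snd_Upay_mu0)
  qed
  ultimately show ?thesis unfolding conditionB_def by blast
qed
lemma partii: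
  fixes G :: "('s::finite,'b::finite) game"
  assumes mn: "\<And>s. m s \<ge> 0" and msum: "(\<Sum>s\<in>UNIV. m s) = 1" and nB: "\<not> conditionB G m"
  shows "\<exists>N. open N \<and> G \<in> N \<and> (\<forall>G'\<in>N. \<not> conditionB G' m)"
proof (rule ccontr)
  assume contra: "\<not> ?thesis"
  define box where "box k = {G'::('s,'b) game. \<forall>s b. \<bar>fst (G' s b) - fst (G s b)\<bar> < 1 / real (Suc k) \<and> \<bar>snd (G' s b) - snd (G s b)\<bar> < 1 / real (Suc k)}" for k
  have "\<forall>k. \<exists>u. u \<in> box k \<and> conditionB u m"
  proof
    fix k
    have "open (box k)" unfolding box_def by (rule open_box_game)
    moreover have "G \<in> box k" by (simp add: box_def)
    ultimately show "\<exists>u. u \<in> box k \<and> conditionB u m" using contra by blast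
  qed
  then obtain u where ubox: "\<And>k. u k \<in> box k" and uB: "\<And>k. conditionB (u k) m" by metis
  have "\<forall>k. \<exists>yy. is_strategy yy \<and> (\<exists>s t. yy s \<noteq> yy t) \<and> C1 (u k) m yy \<and> C2 (u k) m yy"
    using uB by (simp add: conditionB_def)
  then obtain y where yprop: "\<And>k. is_strategy (y k) \<and> (\<exists>s t. y k s \<noteq> y k t) \<and> C1 (u k) m (y k) \<and> C2 (u k) m (y k)"
    by metis
  define A where "A = {b. wpay G m b = v2 G m}"
  obtain bs where bs: "wpay G m bs = v2 G m" using v2_attained by blast
  have bsA: "bs \<in> A" using bs by (simp add: A_def)
  define ybar where "ybar k b = (\<Sum>t\<in>UNIV. m t * y k t b)" for k b
  define Nn where "Nn k = (\<Sum>s\<in>UNIV. \<Sum>t\<in>UNIV. \<Sum>b\<in>UNIV. \<bar>y k s b - y k t b\<bar>)" for k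
  define T where "T k = (\<Sum>b\<in>UNIV. if b \<in> A then 0 else ybar k b)" for k
  define ch where "ch k b = (if b = bs then - T k / Nn k else 0) + (if b \<in> A then 0 else ybar k b / Nn k)" for k b
  define h where "h k s b = (y k s b - ybar k b) / Nn k + ch k b" for k s b
  define Au where "Au k = (\<Sum>s\<in>UNIV. m s * (\<Sum>b\<in>UNIV. \<bar>snd (u k s b)\<bar>))" for k
  note N = normalize[OF mn msum, of "y k" _ _ "u k" bs A for k, OF _ _ _ _ bsA,
      folded ybar_def Nn_def, folded T_def, folded ch_def, folded h_def]
  have NF: "Nn k > 0 \<and> (\<forall>s. (\<Sum>b\<in>UNIV. h k s b) = 0) \<and> (\<forall>s b. b \<notin> A \<longrightarrow> h k s b \<ge> 0)
     \<and> (\<forall>\<mu>\<in>Mset m. gapf (u k) \<mu> (h k) \<ge> 0) \<and> c2f (u k) m (h k) \<ge> 0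
     \<and> (\<Sum>s\<in>UNIV. \<Sum>t\<in>UNIV. \<Sum>b\<in>UNIV. \<bar>h k s b - h k t b\<bar>) = 1
     \<and> (\<forall>s b. \<bar>(y k s b - ybar k b) / Nn k\<bar> \<le> 1)
     \<and> (\<forall>b. ybar k b * (v2 (u k) m - wpay (u k) m b) \<le> Nn k * Au k)
     \<and> (\<forall>b. ybar k b \<ge> 0)
     \<and> (\<forall>s b. h k s b = (if b \<in> A then (y k s b - ybar k b) / Nn k + (if b = bs then - T k / Nn k else 0) else y k s b / Nn k))" for k
  proof -
    obtain s0 t0 where st: "y k s0 \<noteq> y k t0" using yprop[of k] by blast
    have ys: "is_strategy (y k)" and c1: "C1 (u k) m (y k)" and c2: "C2 (u k) m (y k)" using yprop[of k] by auto
    show ?thesis using N[OF ys st c1 c2] unfolding Au_def by blast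
  qed
  have uc1: "(\<lambda>k. fst (u k s b)) \<longlonglongrightarrow> fst (G s b)" for s b
  proof (rule box_conv)
    fix k show "\<bar>fst (u k s b) - fst (G s b)\<bar> < 1 / real (Suc k)" using ubox[of k] by (simp add: box_def)
  qed
  have uc2: "(\<lambda>k. snd (u k s b)) \<longlonglongrightarrow> snd (G s b)" for s b
  proof (rule box_conv)
    fix k show "\<bar>snd (u k s b) - snd (G s b)\<bar> < 1 / real (Suc k)" using ubox[of k] by (simp add: box_def)
  qed
  have wconv: "(\<lambda>k. wpay (u k) m b) \<longlonglongrightarrow> wpay G m b" for b
    unfolding wpay_def by (intro tendsto_intros uc2)
  define AG where "AG = (\<Sum>s\<in>UNIV. m s * (\<Sum>b\<in>UNIV. \<bar>snd (G s b)\<bar>))"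
  have Auconv: "Au \<longlonglongrightarrow> AG"
    unfolding Au_def AG_def by (intro tendsto_intros uc2)
  have AG0: "AG \<ge> 0" unfolding AG_def by (intro sum_nonneg mult_nonneg_nonneg mn) (auto intro: sum_nonneg)
  define C where "C b = (if b \<in> A then 0 else 2 * (AG + 1) / (v2 G m - wpay G m b))" for b
  have gbpos: "v2 G m - wpay G m b > 0" if "b \<notin> A" for b
    using that wpay_le_v2[of G m b] by (simp add: A_def)
  have C0: "C b \<ge> 0" for b
    using gbpos[of b] AG0 by (auto simp: C_def intro!: divide_nonneg_pos)
  have ev: "eventually (\<lambda>k. \<forall>b. b \<notin> A \<longrightarrow> ybar k b / Nn k \<le> C b) sequentially"
  proof (rule eventually_all_finite)
    fix b
    show "eventually (\<lambda>k. b \<notin> A \<longrightarrow> ybar k b / Nn k \<le> C b) sequentially"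
    proof (cases "b \<in> A")
      case True then show ?thesis by simp
    next
      case False
      define gb where "gb = v2 G m - wpay G m b"
      have gb: "gb > 0" using gbpos[OF False] by (simp add: gb_def)
      have "(\<lambda>k. wpay (u k) m bs - wpay (u k) m b) \<longlonglongrightarrow> gb"
        using tendsto_diff[OF wconv[of bs] wconv[of b]] bs by (simp add: gb_def)
      then have e1: "eventually (\<lambda>k. wpay (u k) m bs - wpay (u k) m b > gb / 2) sequentially"
        by (rule order_tendstoD) (use gb in simp)
      have e2: "eventually (\<lambda>k. Au k < AG + 1) sequentially"
        by (rule order_tendstoD(2)[OF Auconv]) simp
      show ?thesis using e1 e2
      proof eventually_elim
        case (elim k)
        have "v2 (u k) m - wpay (u k) m b \<ge> wpay (u k) m bs - wpay (u k) m b"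
          using wpay_le_v2[of "u k" m bs] by simp
        then have d: "v2 (u k) m - wpay (u k) m b > gb / 2" using elim by linarith
        have Au0: "Au k \<ge> 0" unfolding Au_def by (intro sum_nonneg mult_nonneg_nonneg mn) (auto intro: sum_nonneg)
        have NP: "Nn k > 0" using NF[of k] by blast
        have "ybar k b * (v2 (u k) m - wpay (u k) m b) \<le> Nn k * Au k" using NF[of k] by blast
        then have "ybar k b / Nn k \<le> Au k / (v2 (u k) m - wpay (u k) m b)"
          using NP d gb by (simp add: field_simps)
        also have "\<dots> \<le> (AG + 1) / (gb / 2)"
          by (rule frac_le) (use elim d gb AG0 in auto)
        also have "\<dots> = C b" using False by (simp add: C_def gb_def)
        finally show ?case by simp
      qed
    qed
  qed
  then obtain k0 where k0: "\<And>k b. k \<ge> k0 \<Longrightarrow> b \<notin> A \<Longrightarrow> ybar k b / Nn k \<le> C b"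
    by (auto simp: eventually_sequentially)
  define R where "R = 1 + (\<Sum>b\<in>UNIV. C b)"
  have CleR: "C b \<le> R - 1" for b
    unfolding R_def using member_le_sum[of b UNIV C] C0 by simp
  have R1: "R \<ge> 1" unfolding R_def using sum_nonneg[of UNIV C] C0 by simp
  have hbound: "\<bar>h k s b\<bar> \<le> R" if kk: "k \<ge> k0" for k s b
  proof -
    have NP: "Nn k > 0" using NF[of k] by blast
    have d1: "\<bar>(y k s b - ybar k b) / Nn k\<bar> \<le> 1" using NF[of k] by blast
    have hf: "h k s b = (if b \<in> A then (y k s b - ybar k b) / Nn k + (if b = bs then - T k / Nn k else 0) else y k s b / Nn k)"
      using NF[of k] by blast
    have yb0: "ybar k b' \<ge> 0" for b' using NF[of k] by blast
    have TN: "T k / Nn k = (\<Sum>b\<in>UNIV. if b \<in> A then 0 else ybar k b / Nn k)"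
      unfolding T_def sum_divide_distrib by (rule sum.cong) auto
    have "T k / Nn k \<le> (\<Sum>b\<in>UNIV. C b)"
      unfolding TN by (rule sum_mono) (auto simp: C0 k0[OF kk])
    moreover have "T k / Nn k \<ge> 0" unfolding TN by (intro sum_nonneg) (auto intro!: divide_nonneg_pos yb0 NP)
    ultimately have TR: "\<bar>T k / Nn k\<bar> \<le> R - 1" by (simp add: R_def)
    show ?thesis
    proof (cases "b \<in> A")
      case True
      have "\<bar>h k s b\<bar> \<le> \<bar>(y k s b - ybar k b) / Nn k\<bar> + \<bar>if b = bs then - T k / Nn k else 0\<bar>"
      proof -
        have eqh: "h k s b = (y k s b - ybar k b) / Nn k + (if b = bs then - T k / Nn k else 0)" using True hf by simp
        show ?thesis unfolding eqh by (rule abs_triangle_ineq)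
      qed
      also have "\<dots> \<le> 1 + (R - 1)" using d1 TR R1 by (intro add_mono) auto
      finally show ?thesis by simp
    next
      case False
      have "y k s b / Nn k = (y k s b - ybar k b) / Nn k + ybar k b / Nn k" by (simp add: diff_divide_distrib)
      moreover have "ybar k b / Nn k \<le> R - 1" using k0[OF kk False] CleR[of b] by simp
      moreover have "y k s b / Nn k \<ge> 0" using NF[of k] False hf by auto
      moreover have "(y k s b - ybar k b) / Nn k \<le> 1" using d1 abs_le_iff by blast
      moreover have "h k s b = y k s b / Nn k" using False hf by simp
      ultimately show ?thesis by (simp only: abs_le_iff) linarith
    qed
  qed
  define z :: "nat \<Rightarrow> real^('s\<times>'b)" where "z j = (\<chi> i. h (k0 + j) (fst i) (snd i))" for j
  have "bounded (range z)"
    unfolding bounded_iff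
  proof (intro exI[of _ "real CARD('s\<times>'b) * R"] ballI)
    fix x assume "x \<in> range z"
    then obtain j where x: "x = z j" by auto
    have "norm x \<le> (\<Sum>i\<in>UNIV. \<bar>x $ i\<bar>)" by (rule norm_le_l1_cart)
    also have "\<dots> \<le> (\<Sum>i\<in>(UNIV::('s\<times>'b) set). R)"
      by (rule sum_mono) (simp add: x z_def hbound)
    finally show "norm x \<le> real CARD('s\<times>'b) * R" by simp
  qed
  then obtain l r where r: "strict_mono r" and lim: "(z \<circ> r) \<longlonglongrightarrow> l"
    using bounded_imp_convergent_subsequence by blast
  define \<phi> where "\<phi> j = k0 + r j" for j
  have \<phi>mono: "strict_mono \<phi>" using r by (simp add: strict_mono_def \<phi>_def)
  have \<phi>k0: "\<phi> j \<ge> k0" for j by (simp add: \<phi>_def)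
  define hl where "hl s b = l $ (s, b)" for s b
  have hc: "(\<lambda>j. h (\<phi> j) s b) \<longlonglongrightarrow> hl s b" for s b
  proof -
    have "(\<lambda>j. (z \<circ> r) j $ (s, b)) \<longlonglongrightarrow> l $ (s, b)" by (rule tendsto_vec_nth[OF lim])
    then show ?thesis by (simp add: z_def \<phi>_def hl_def)
  qed
  have uc1': "(\<lambda>j. fst (u (\<phi> j) s b)) \<longlonglongrightarrow> fst (G s b)" for s b
    using LIMSEQ_subseq_LIMSEQ[OF uc1 \<phi>mono] by (simp add: o_def)
  have uc2': "(\<lambda>j. snd (u (\<phi> j) s b)) \<longlonglongrightarrow> snd (G s b)" for s b
    using LIMSEQ_subseq_LIMSEQ[OF uc2 \<phi>mono] by (simp add: o_def)
  have L1: "(\<Sum>b\<in>UNIV. hl s b) = 0" for s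
  proof -
    have "(\<lambda>j. \<Sum>b\<in>UNIV. h (\<phi> j) s b) \<longlonglongrightarrow> (\<Sum>b\<in>UNIV. hl s b)" by (intro tendsto_sum hc)
    moreover have "(\<lambda>j. \<Sum>b\<in>UNIV. h (\<phi> j) s b) = (\<lambda>j. 0)" using NF by blast
    ultimately show ?thesis using LIMSEQ_unique tendsto_const by metis
  qed
  have L2: "hl s b \<ge> 0" if "b \<notin> A" for s b
    by (rule LIMSEQ_le_const[OF hc]) (use NF that in blast)
  have L3: "gapf G \<mu> hl \<ge> 0" if mu: "\<mu> \<in> Mset m" for \<mu>
  proof (rule LIMSEQ_le_const)
    show "(\<lambda>j. gapf (u (\<phi> j)) \<mu> (h (\<phi> j))) \<longlonglongrightarrow> gapf G \<mu> hl"
      unfolding gapf_def by (intro tendsto_sum tendsto_mult tendsto_diff tendsto_const hc uc1')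
    show "\<exists>N. \<forall>n\<ge>N. 0 \<le> gapf (u (\<phi> n)) \<mu> (h (\<phi> n))" using NF mu by blast
  qed
  have L4: "c2f G m hl \<ge> 0"
  proof (rule LIMSEQ_le_const)
    show "(\<lambda>j. c2f (u (\<phi> j)) m (h (\<phi> j))) \<longlonglongrightarrow> c2f G m hl"
      unfolding c2f_def by (intro tendsto_sum tendsto_mult tendsto_const hc uc2')
    show "\<exists>N. \<forall>n\<ge>N. 0 \<le> c2f (u (\<phi> n)) m (h (\<phi> n))" using NF by blast
  qed
  have L5': "(\<Sum>s\<in>UNIV. \<Sum>t\<in>UNIV. \<Sum>b\<in>UNIV. \<bar>hl s b - hl t b\<bar>) = 1"
  proof -
    have "(\<lambda>j. \<Sum>s\<in>UNIV. \<Sum>t\<in>UNIV. \<Sum>b\<in>UNIV. \<bar>h (\<phi> j) s b - h (\<phi> j) t b\<bar>)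
        \<longlonglongrightarrow> (\<Sum>s\<in>UNIV. \<Sum>t\<in>UNIV. \<Sum>b\<in>UNIV. \<bar>hl s b - hl t b\<bar>)" by (intro tendsto_sum tendsto_rabs tendsto_diff hc)
    moreover have "(\<lambda>j. \<Sum>s\<in>UNIV. \<Sum>t\<in>UNIV. \<Sum>b\<in>UNIV. \<bar>h (\<phi> j) s b - h (\<phi> j) t b\<bar>) = (\<lambda>j. 1)"
      using NF by blast
    ultimately have "(\<lambda>j. 1::real) \<longlonglongrightarrow> (\<Sum>s\<in>UNIV. \<Sum>t\<in>UNIV. \<Sum>b\<in>UNIV. \<bar>hl s b - hl t b\<bar>)" by simp
    from LIMSEQ_unique[OF tendsto_const this] show ?thesis by simp
  qed
  have "\<exists>s0 t0 b0. hl s0 b0 \<noteq> hl t0 b0"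
  proof (rule ccontr)
    assume nt: "\<not> (\<exists>s0 t0 b0. hl s0 b0 \<noteq> hl t0 b0)"
    have eq: "\<bar>hl s b - hl t b\<bar> = 0" for s t b
    proof -
      have "hl s b = hl t b" using nt by blast
      then show ?thesis by simp
    qed
    have "(\<Sum>s\<in>UNIV. \<Sum>t\<in>UNIV. \<Sum>b\<in>UNIV. \<bar>hl s b - hl t b\<bar>) = 0" by (simp only: eq sum.neutral_const)
    with L5' show False by simp
  qed
  then obtain s0 t0 b0 where L5: "hl s0 b0 \<noteq> hl t0 b0" by blast
  have "conditionB G m"
    by (rule construct_B[OF bsA A_def L1 L2 L3 L4 L5])
  with nB show False by simp
qed
lemma marg_identity:
  fixes g f :: "'s::finite \<Rightarrow> real"
  assumes "\<mu> \<in> Mset m"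
  shows "(\<Sum>s\<in>UNIV. \<Sum>a\<in>UNIV. \<mu> s a * ((g s - g a) * f s)) = (\<Sum>s\<in>UNIV. \<Sum>a\<in>UNIV. \<mu> s a * (g a * (f a - f s)))"
proof -
  have row: "(\<Sum>a\<in>UNIV. \<mu> s a) = m s" for s using assms by (simp add: Mset_def)
  have col: "(\<Sum>s\<in>UNIV. \<mu> s a) = m a" for a using assms by (simp add: Mset_def)
  have e1: "(\<Sum>s\<in>UNIV. \<Sum>a\<in>UNIV. \<mu> s a * (g s * f s)) = (\<Sum>s\<in>UNIV. m s * (g s * f s))"
    by (simp add: sum_distrib_right[symmetric] row)
  have "(\<Sum>s\<in>UNIV. \<Sum>a\<in>UNIV. \<mu> s a * (g a * f a)) = (\<Sum>a\<in>UNIV. \<Sum>s\<in>UNIV. \<mu> s a * (g a * f a))"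
    by (rule sum.swap)
  also have "\<dots> = (\<Sum>a\<in>UNIV. m a * (g a * f a))"
    by (simp add: sum_distrib_right[symmetric] col)
  finally have e2: "(\<Sum>s\<in>UNIV. \<Sum>a\<in>UNIV. \<mu> s a * (g a * f a)) = (\<Sum>s\<in>UNIV. m s * (g s * f s))" .
  have "(\<Sum>s\<in>UNIV. \<Sum>a\<in>UNIV. \<mu> s a * ((g s - g a) * f s))
      = (\<Sum>s\<in>UNIV. \<Sum>a\<in>UNIV. \<mu> s a * (g s * f s)) - (\<Sum>s\<in>UNIV. \<Sum>a\<in>UNIV. \<mu> s a * (g a * f s))"
    by (simp add: algebra_simps sum_subtractf)
  also have "\<dots> = (\<Sum>s\<in>UNIV. \<Sum>a\<in>UNIV. \<mu> s a * (g a * f a)) - (\<Sum>s\<in>UNIV. \<Sum>a\<in>UNIV. \<mu> s a * (g a * f s))"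
    using e1 e2 by simp
  also have "\<dots> = (\<Sum>s\<in>UNIV. \<Sum>a\<in>UNIV. \<mu> s a * (g a * (f a - f s)))"
    by (simp add: algebra_simps sum_subtractf)
  finally show ?thesis .
qed

lemma quad_identity:
  fixes g :: "'s::finite \<Rightarrow> real"
  assumes "\<mu> \<in> Mset m"
  shows "(\<Sum>s\<in>UNIV. \<Sum>a\<in>UNIV. \<mu> s a * ((g s - g a) * g s)) = (\<Sum>s\<in>UNIV. \<Sum>a\<in>UNIV. \<mu> s a * (g s - g a)^2) / 2"
proof -
  have X: "(\<Sum>s\<in>UNIV. \<Sum>a\<in>UNIV. \<mu> s a * ((g s - g a) * g s)) = (\<Sum>s\<in>UNIV. \<Sum>a\<in>UNIV. \<mu> s a * (g a * (g a - g s)))"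
    by (rule marg_identity[OF assms])
  have "(\<Sum>s\<in>UNIV. \<Sum>a\<in>UNIV. \<mu> s a * ((g s - g a) * g s)) + (\<Sum>s\<in>UNIV. \<Sum>a\<in>UNIV. \<mu> s a * (g a * (g a - g s)))
      = (\<Sum>s\<in>UNIV. \<Sum>a\<in>UNIV. \<mu> s a * (g s - g a)^2)"
    by (simp add: sum.distrib[symmetric] power2_eq_square algebra_simps)
  with X show ?thesis by simp
qed

lemma offdiag:
  assumes "\<mu> \<in> Mset m" "\<mu> \<noteq> mu0 m"
  shows "\<exists>s a. s \<noteq> a \<and> \<mu> s a > 0"
proof (rule ccontr)
  assume nt: "\<not> (\<exists>s a. s \<noteq> a \<and> \<mu> s a > 0)"
  have z: "\<mu> s a = 0" if "s \<noteq> a" for s a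
  proof -
    have "\<mu> s a \<ge> 0" using assms(1) by (simp add: Mset_def)
    moreover have "\<not> 0 < \<mu> s a" using nt that by blast
    ultimately show ?thesis by simp
  qed
  have "\<mu> s a = mu0 m s a" for s a
  proof (cases "s = a")
    case True
    have "(\<Sum>a'\<in>UNIV. \<mu> s a') = (\<Sum>a'\<in>UNIV. if a' = s then \<mu> s s else 0)"
      by (rule sum.cong) (auto simp: z)
    then have "(\<Sum>a'\<in>UNIV. \<mu> s a') = \<mu> s s" by simp
    then show ?thesis using assms(1) True by (simp add: Mset_def mu0_def)
  next
    case False then show ?thesis by (simp add: z mu0_def)
  qed
  then have "\<mu> = mu0 m" by (simp add: fun_eq_iff)
  with assms(2) show False by simp
qed
lemma exists_gap_bound:
  fixes f :: "'a::finite \<Rightarrow> 'a \<Rightarrow> real"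
  shows "\<exists>\<gamma>>0. \<forall>s a. f s a \<noteq> 0 \<longrightarrow> \<gamma> \<le> \<bar>f s a\<bar>"
proof -
  define D where "D = (\<lambda>(s,a). \<bar>f s a\<bar>) ` {(s,a). f s a \<noteq> 0}"
  have fin: "finite D" unfolding D_def by simp
  define \<gamma> where "\<gamma> = (if D = {} then 1 else Min D)"
  have pos: "\<gamma> > 0"
  proof (cases "D = {}")
    case True then show ?thesis by (simp add: \<gamma>_def)
  next
    case False
    have "Min D \<in> D" using fin False by (rule Min_in)
    then show ?thesis using False by (auto simp: \<gamma>_def D_def)
  qed
  have "\<gamma> \<le> \<bar>f s a\<bar>" if "f s a \<noteq> 0" for s a
  proof -
    have mem: "\<bar>f s a\<bar> \<in> D" using that by (force simp: D_def)
    then have "D \<noteq> {}" by auto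
    then show ?thesis using Min_le[OF fin mem] by (simp add: \<gamma>_def)
  qed
  with pos show ?thesis by blast
qed

lemma tau_exists:
  fixes \<kappa> :: "'s::finite \<Rightarrow> real"
  shows "\<exists>\<tau>. inj \<tau> \<and> (\<forall>\<mu>\<in>Mset m. 0 \<le> (\<Sum>s\<in>UNIV. \<Sum>a\<in>UNIV. \<mu> s a * ((\<tau> s - \<tau> a) * \<kappa> s)))"
proof -
  obtain \<gamma> where gpos: "\<gamma> > 0" and gb: "\<And>s a. \<kappa> s - \<kappa> a \<noteq> 0 \<Longrightarrow> \<gamma> \<le> \<bar>\<kappa> s - \<kappa> a\<bar>"
    using exists_gap_bound[of "\<lambda>s a. \<kappa> s - \<kappa> a"] by blast
  define rr :: "'s \<Rightarrow> real" where "rr s = real (to_nat s) / (real (to_nat s) + 1)" for s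
  have rr0: "rr s \<ge> 0" for s by (simp add: rr_def)
  have rr1: "rr s < 1" for s by (simp add: rr_def)
  have rrinj: "inj rr"
  proof (rule injI)
    fix x y assume "rr x = rr y"
    then have "real (to_nat x) * (real (to_nat y) + 1) = real (to_nat y) * (real (to_nat x) + 1)"
      by (simp add: rr_def divide_eq_eq field_simps)
    then have "real (to_nat x) = real (to_nat y)" by (simp add: algebra_simps)
    then have "to_nat x = to_nat y" by simp
    then show "x = y" by simp
  qed
  define \<tau> where "\<tau> s = \<kappa> s + \<gamma> / 2 * rr s" for s
  have "inj \<tau>"
  proof (rule injI)
    fix s a assume eq: "\<tau> s = \<tau> a"
    show "s = a"
    proof (cases "\<kappa> s = \<kappa> a")
      case True
      then have "rr s = rr a" using eq gpos by (simp add: \<tau>_def)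
      then show ?thesis using rrinj by (simp add: inj_eq)
    next
      case False
      then have g: "\<gamma> \<le> \<bar>\<kappa> s - \<kappa> a\<bar>" using gb by simp
      have e: "\<kappa> s - \<kappa> a = \<gamma> / 2 * (rr a - rr s)" using eq by (simp add: \<tau>_def algebra_simps)
      have r: "\<bar>rr a - rr s\<bar> < 1" using rr0[of a] rr1[of a] rr0[of s] rr1[of s] by linarith
      have "\<bar>\<kappa> s - \<kappa> a\<bar> = \<gamma> / 2 * \<bar>rr a - rr s\<bar>" unfolding e using gpos by (simp add: abs_mult)
      also have "\<dots> < \<gamma> / 2 * 1" by (rule mult_strict_left_mono[OF r]) (use gpos in simp)
      finally have "\<bar>\<kappa> s - \<kappa> a\<bar> < \<gamma> / 2" by simp
      with g gpos show ?thesis by linarith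
    qed
  qed
  moreover have "0 \<le> (\<Sum>s\<in>UNIV. \<Sum>a\<in>UNIV. \<mu> s a * ((\<tau> s - \<tau> a) * \<kappa> s))" if mu: "\<mu> \<in> Mset m" for \<mu>
  proof -
    have mu0': "\<mu> s a \<ge> 0" for s a using mu by (simp add: Mset_def)
    have "(\<Sum>s\<in>UNIV. \<Sum>a\<in>UNIV. \<mu> s a * ((\<tau> s - \<tau> a) * \<kappa> s))
        = (\<Sum>s\<in>UNIV. \<Sum>a\<in>UNIV. \<mu> s a * ((\<kappa> s - \<kappa> a) * \<kappa> s)) + \<gamma> / 2 * (\<Sum>s\<in>UNIV. \<Sum>a\<in>UNIV. \<mu> s a * ((rr s - rr a) * \<kappa> s))"
    proof -
      have "(\<Sum>s\<in>UNIV. \<Sum>a\<in>UNIV. \<mu> s a * ((\<tau> s - \<tau> a) * \<kappa> s))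
        = (\<Sum>s\<in>UNIV. \<Sum>a\<in>UNIV. \<mu> s a * ((\<kappa> s - \<kappa> a) * \<kappa> s) + \<gamma> / 2 * (\<mu> s a * ((rr s - rr a) * \<kappa> s)))"
        by (intro sum.cong refl) (simp add: \<tau>_def algebra_simps)
      then show ?thesis by (simp add: sum.distrib sum_distrib_left)
    qed
    also have "\<dots> = (\<Sum>s\<in>UNIV. \<Sum>a\<in>UNIV. \<mu> s a * (\<kappa> s - \<kappa> a)^2) / 2 + \<gamma> / 2 * (\<Sum>s\<in>UNIV. \<Sum>a\<in>UNIV. \<mu> s a * (rr a * (\<kappa> a - \<kappa> s)))"
      by (simp add: quad_identity[OF mu] marg_identity[OF mu])
    also have "\<dots> = (\<Sum>s\<in>UNIV. \<Sum>a\<in>UNIV. \<mu> s a * ((\<kappa> s - \<kappa> a)^2 / 2 + \<gamma> / 2 * (rr a * (\<kappa> a - \<kappa> s))))"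
    proof -
      have "(\<Sum>s\<in>UNIV. \<Sum>a\<in>UNIV. \<mu> s a * ((\<kappa> s - \<kappa> a)^2 / 2 + \<gamma> / 2 * (rr a * (\<kappa> a - \<kappa> s))))
         = (\<Sum>s\<in>UNIV. \<Sum>a\<in>UNIV. \<mu> s a * (\<kappa> s - \<kappa> a)^2 / 2 + \<gamma> / 2 * (\<mu> s a * (rr a * (\<kappa> a - \<kappa> s))))"
        by (intro sum.cong refl) (simp add: algebra_simps)
      then show ?thesis by (simp add: sum.distrib sum_distrib_left sum_divide_distrib)
    qed
    also have "\<dots> \<ge> 0"
    proof (intro sum_nonneg mult_nonneg_nonneg mu0')
      fix s a
      show "0 \<le> (\<kappa> s - \<kappa> a)^2 / 2 + \<gamma> / 2 * (rr a * (\<kappa> a - \<kappa> s))"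
      proof (cases "\<kappa> s = \<kappa> a")
        case True then show ?thesis by simp
      next
        case False
        define d where "d = \<kappa> s - \<kappa> a"
        have g: "\<gamma> \<le> \<bar>d\<bar>" using gb False by (simp add: d_def)
        have "\<gamma> * \<bar>d\<bar> \<le> d^2" using g gpos
          by (metis abs_ge_zero mult_right_mono power2_abs power2_eq_square)
        moreover have "\<bar>rr a * (\<kappa> a - \<kappa> s)\<bar> \<le> \<bar>d\<bar>"
          using rr0[of a] rr1[of a] by (simp add: abs_mult d_def abs_minus_commute mult_left_le_one_le)
        then have "- (\<gamma> * \<bar>d\<bar>) \<le> \<gamma> * (rr a * (\<kappa> a - \<kappa> s))"
          using gpos by (smt (verit) abs_le_iff mult_left_mono mult_minus_right)
        ultimately show ?thesis by (simp add: d_def[symmetric])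
      qed
    qed
    finally show ?thesis .
  qed
  ultimately show ?thesis by blast
qed
lemma gapf_lin:
  "gapf u \<mu> (\<lambda>s b. \<alpha> * y1 s b + c b + \<beta> * y2 s b) = \<alpha> * gapf u \<mu> y1 + \<beta> * gapf u \<mu> y2"
proof -
  have "gapf u \<mu> (\<lambda>s b. \<alpha> * y1 s b + c b + \<beta> * y2 s b)
     = (\<Sum>s\<in>UNIV. \<Sum>a\<in>UNIV. \<alpha> * (\<mu> s a * (\<Sum>b\<in>UNIV. (y1 s b - y1 a b) * fst (u s b)))
          + \<beta> * (\<mu> s a * (\<Sum>b\<in>UNIV. (y2 s b - y2 a b) * fst (u s b))))"
    unfolding gapf_def
  proof (intro sum.cong refl)
    fix s a
    have E1: "(\<Sum>b\<in>UNIV. (\<alpha> * y1 s b + c b + \<beta> * y2 s b - (\<alpha> * y1 a b + c b + \<beta> * y2 a b)) * fst (u s b))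
       = (\<Sum>b\<in>UNIV. \<alpha> * ((y1 s b - y1 a b) * fst (u s b)) + \<beta> * ((y2 s b - y2 a b) * fst (u s b)))"
      by (intro sum.cong refl) (simp add: algebra_simps)
    show "\<mu> s a * (\<Sum>b\<in>UNIV. (\<alpha> * y1 s b + c b + \<beta> * y2 s b - (\<alpha> * y1 a b + c b + \<beta> * y2 a b)) * fst (u s b))
       = \<alpha> * (\<mu> s a * (\<Sum>b\<in>UNIV. (y1 s b - y1 a b) * fst (u s b))) + \<beta> * (\<mu> s a * (\<Sum>b\<in>UNIV. (y2 s b - y2 a b) * fst (u s b)))"
    proof -
      have E2: "(\<Sum>b\<in>UNIV. \<alpha> * ((y1 s b - y1 a b) * fst (u s b)) + \<beta> * ((y2 s b - y2 a b) * fst (u s b)))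
        = \<alpha> * (\<Sum>b\<in>UNIV. (y1 s b - y1 a b) * fst (u s b)) + \<beta> * (\<Sum>b\<in>UNIV. (y2 s b - y2 a b) * fst (u s b))"
        by (simp only: sum.distrib sum_distrib_left)
      show ?thesis unfolding E1 E2 by (simp add: algebra_simps)
    qed
  qed
  also have "\<dots> = \<alpha> * gapf u \<mu> y1 + \<beta> * gapf u \<mu> y2"
    unfolding gapf_def by (simp add: sum.distrib sum_distrib_left)
  finally show ?thesis .
qed

lemma c2f_close:
  assumes mn: "\<And>s. m s \<ge> 0" and d: "\<And>s b. \<bar>y1 s b - y2 s b\<bar> \<le> \<delta>"
  shows "c2f u m y2 - \<delta> * (\<Sum>s\<in>UNIV. m s * (\<Sum>b\<in>UNIV. \<bar>snd (u s b)\<bar>)) \<le> c2f u m y1"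
proof -
  have "c2f u m y2 - c2f u m y1 = (\<Sum>s\<in>UNIV. m s * (\<Sum>b\<in>UNIV. (y2 s b - y1 s b) * snd (u s b)))"
    unfolding c2f_def by (simp add: sum_subtractf[symmetric] right_diff_distrib[symmetric] left_diff_distrib)
  also have "\<dots> \<le> (\<Sum>s\<in>UNIV. m s * (\<Sum>b\<in>UNIV. \<delta> * \<bar>snd (u s b)\<bar>))"
  proof (intro sum_mono mult_left_mono mn)
    fix s b
    have "\<bar>(y2 s b - y1 s b) * snd (u s b)\<bar> \<le> \<delta> * \<bar>snd (u s b)\<bar>"
      using d[of s b] by (simp add: abs_mult abs_minus_commute mult_right_mono)
    then show "(y2 s b - y1 s b) * snd (u s b) \<le> \<delta> * \<bar>snd (u s b)\<bar>" by linarith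
  qed
  also have "\<dots> = \<delta> * (\<Sum>s\<in>UNIV. m s * (\<Sum>b\<in>UNIV. \<bar>snd (u s b)\<bar>))"
    by (simp add: sum_distrib_left mult.left_commute)
  finally show ?thesis by linarith
qed

lemma gapf_addgame:
  "gapf (\<lambda>s b. G s b + (P s b, Q s b)) \<mu> y = gapf G \<mu> y + (\<Sum>s\<in>UNIV. \<Sum>a\<in>UNIV. \<mu> s a * (\<Sum>b\<in>UNIV. (y s b - y a b) * P s b))"
  unfolding gapf_def by (simp add: distrib_left sum.distrib)

lemma c2f_addgame:
  "c2f (\<lambda>s b. G s b + (P s b, Q s b)) m y = c2f G m y + (\<Sum>s\<in>UNIV. m s * (\<Sum>b\<in>UNIV. y s b * Q s b))"
  unfolding c2f_def by (simp add: distrib_left sum.distrib)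

lemma wpay_addgame:
  "wpay (\<lambda>s b. G s b + (P s b, Q s b)) m b = wpay G m b + (\<Sum>s\<in>UNIV. m s * Q s b)"
  unfolding wpay_def by (simp add: distrib_left sum.distrib)

lemma gap_bound3:
  fixes y :: "'s::finite \<Rightarrow> 'b::finite \<Rightarrow> real"
  obtains \<gamma> where "\<gamma> > 0" and "\<And>s a b. y s b \<noteq> y a b \<Longrightarrow> \<gamma> \<le> \<bar>y s b - y a b\<bar>"
proof -
  define f where "f p q = y (fst p) (snd p) - y (fst q) (snd p)" for p q :: "'s \<times> 'b"
  obtain g where g: "g > 0" and H: "\<forall>p q. f p q \<noteq> 0 \<longrightarrow> g \<le> \<bar>f p q\<bar>"
    using exists_gap_bound[of f] by blast
  have "g \<le> \<bar>y s b - y a b\<bar>" if "y s b \<noteq> y a b" for s a b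
    using H[rule_format, of "(s,b)" "(a,b)"] that by (simp add: f_def)
  with g that show thesis by blast
qed
lemma parti:
  fixes G :: "('s::finite,'b::finite) game"
  assumes mpos: "\<And>s. m s > 0" and msum: "(\<Sum>s\<in>UNIV. m s) = 1" and cB: "conditionB G m"
    and oN: "open N" and GN: "G \<in> N"
  shows "\<exists>G'\<in>N. Ehat G' m \<noteq> {}"
proof -
  have mn: "m s \<ge> 0" for s using mpos[of s] by simp
  obtain y s0 t0 where ys: "is_strategy y" and nc: "y s0 \<noteq> y t0" and c1: "C1 G m y" and c2: "C2 G m y"
    using cB by (auto simp: conditionB_def)
  have y0: "y s b \<ge> 0" for s b using ys by (simp add: is_strategy_def is_distr_def)
  have ysum: "(\<Sum>b\<in>UNIV. y s b) = 1" for s using ys by (simp add: is_strategy_def is_distr_def)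
  have yle1: "y s b \<le> 1" for s b
  proof -
    have "y s b \<le> (\<Sum>b\<in>UNIV. y s b)" by (rule member_le_sum) (auto simp: y0)
    then show ?thesis by (simp add: ysum)
  qed
  obtain b1 where b1: "y s0 b1 \<noteq> y t0 b1" using nc by auto
  obtain b2 where b2: "b2 \<noteq> b1"
  proof (rule ccontr)
    assume "\<not> thesis"
    then have all: "b = b1" for b using that by blast
    have U: "(UNIV::'b set) = {b1}" using all by auto
    have "(\<Sum>b\<in>UNIV. y s b) = y s b1" for s by (simp add: U)
    then have "y s0 b1 = y t0 b1" using ysum by simp
    with b1 show False by simp
  qed
  define dd :: "'b \<Rightarrow> real" where "dd b = (if b = b1 then 1 else 0) - (if b = b2 then 1 else 0)" for b
  have ddsum: "(\<Sum>b\<in>UNIV. dd b) = 0" by (simp add: dd_def sum_subtractf)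
  have ddb1: "dd b1 = 1" using b2 by (simp add: dd_def)
  have ddabs: "\<bar>dd b\<bar> \<le> 1" for b using b2 by (simp add: dd_def)
  define \<kappa> where "\<kappa> s = (\<Sum>b\<in>UNIV. dd b * fst (G s b))" for s
  obtain \<tau> where tinj: "inj \<tau>" and tgap: "\<And>\<mu>. \<mu> \<in> Mset m \<Longrightarrow> 0 \<le> (\<Sum>s\<in>UNIV. \<Sum>a\<in>UNIV. \<mu> s a * ((\<tau> s - \<tau> a) * \<kappa> s))"
    using tau_exists[where \<kappa>=\<kappa> and m=m] by blast
  define v where "v s b = \<tau> s * dd b" for s b
  have vgap: "gapf G \<mu> v \<ge> 0" if mu: "\<mu> \<in> Mset m" for \<mu>
  proof -
    have "gapf G \<mu> v = (\<Sum>s\<in>UNIV. \<Sum>a\<in>UNIV. \<mu> s a * ((\<tau> s - \<tau> a) * \<kappa> s))"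
      unfolding gapf_def
    proof (intro sum.cong refl)
      fix s a
      have "(\<Sum>b\<in>UNIV. (v s b - v a b) * fst (G s b)) = (\<Sum>b\<in>UNIV. (\<tau> s - \<tau> a) * (dd b * fst (G s b)))"
        by (intro sum.cong refl) (simp add: v_def algebra_simps)
      then show "\<mu> s a * (\<Sum>b\<in>UNIV. (v s b - v a b) * fst (G s b)) = \<mu> s a * ((\<tau> s - \<tau> a) * \<kappa> s)"
        by (simp add: \<kappa>_def sum_distrib_left)
    qed
    then show ?thesis using tgap[OF mu] by simp
  qed
  define Tb where "Tb = (\<Sum>s\<in>UNIV. \<bar>\<tau> s\<bar>)"
  have tTb: "\<bar>\<tau> s\<bar> \<le> Tb" for s unfolding Tb_def by (rule member_le_sum) auto
  have Tb0: "Tb \<ge> 0" unfolding Tb_def by (rule sum_nonneg) auto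
  obtain \<gamma>y where gy: "\<gamma>y > 0" and gyb': "\<And>s a b. y s b \<noteq> y a b \<Longrightarrow> \<gamma>y \<le> \<bar>y s b - y a b\<bar>"
    using gap_bound3[of y] by blast
  define nB where "nB = real CARD('b)"
  have nB1: "nB \<ge> 1" by (simp add: nB_def)
  obtain r where rpos: "r > 0" and rN: "\<And>G'. (\<forall>s b. \<bar>fst (G' s b) - fst (G s b)\<bar> < r \<and> \<bar>snd (G' s b) - snd (G s b)\<bar> < r) \<Longrightarrow> G' \<in> N"
    using nbhd_game[OF oN GN] by blast
  define \<epsilon> where "\<epsilon> = r / 2"
  have epos: "\<epsilon> > 0" using rpos by (simp add: \<epsilon>_def)
  define z where "z b = (\<Sum>t\<in>UNIV. m t * y t b)" for b
  have z0: "z b \<ge> 0" for b unfolding z_def by (intro sum_nonneg mult_nonneg_nonneg mn y0)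
  have z1: "z b \<le> 1" for b
  proof -
    have "z b \<le> (\<Sum>t\<in>UNIV. m t * 1)" unfolding z_def by (intro sum_mono mult_left_mono yle1 mn)
    then show ?thesis by (simp add: msum)
  qed
  define AG where "AG = (\<Sum>s\<in>UNIV. m s * (\<Sum>b\<in>UNIV. \<bar>snd (G s b)\<bar>))"
  define AH where "AH = (\<Sum>s\<in>UNIV. m s * (\<Sum>b\<in>UNIV. \<bar>y s b - z b\<bar>))"
  have AG0: "AG \<ge> 0" unfolding AG_def by (intro sum_nonneg mult_nonneg_nonneg mn) (auto intro: sum_nonneg)
  have AH0: "AH \<ge> 0" unfolding AH_def by (intro sum_nonneg mult_nonneg_nonneg mn) (auto intro: sum_nonneg)
  define V0 where "V0 = (\<Sum>s\<in>UNIV. m s * (\<Sum>b\<in>UNIV. y s b * (y s b - z b)))"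
  have V0pos: "V0 > 0"
  proof -
    have zb: "(\<Sum>s\<in>UNIV. m s * (y s b - z b)) = 0" for b
      by (simp add: right_diff_distrib sum_subtractf z_def sum_distrib_right[symmetric] msum)
    have Z: "(\<Sum>s\<in>UNIV. m s * (\<Sum>b\<in>UNIV. z b * (y s b - z b))) = 0"
      using swap_weighted[of z m "\<lambda>s b. y s b - z b"] zb by simp
    have "(\<Sum>s\<in>UNIV. m s * (\<Sum>b\<in>UNIV. (y s b - z b)^2))
        = (\<Sum>s\<in>UNIV. m s * (\<Sum>b\<in>UNIV. y s b * (y s b - z b)) - m s * (\<Sum>b\<in>UNIV. z b * (y s b - z b)))"
      by (intro sum.cong refl) (simp add: right_diff_distrib[symmetric] sum_subtractf[symmetric] power2_eq_square left_diff_distrib[symmetric])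
    also have "\<dots> = V0" unfolding V0_def by (simp add: sum_subtractf Z)
    finally have V0eq: "V0 = (\<Sum>s\<in>UNIV. m s * (\<Sum>b\<in>UNIV. (y s b - z b)^2))" by simp
    obtain s1 where s1: "y s1 \<noteq> z"
    proof (cases "y s0 = z")
      case True
      then have "y t0 \<noteq> z" using nc by simp
      then show ?thesis using that by blast
    next
      case False then show ?thesis using that by blast
    qed
    then obtain b' where b': "y s1 b' \<noteq> z b'" by auto
    have "0 < (\<Sum>b\<in>UNIV. (y s1 b - z b)^2)"
      by (rule sum_pos2[of UNIV b']) (use b' in auto)
    then have "0 < m s1 * (\<Sum>b\<in>UNIV. (y s1 b - z b)^2)" using mpos[of s1] by simp
    moreover have "\<And>i. i \<in> UNIV \<Longrightarrow> 0 \<le> m i * (\<Sum>b\<in>UNIV. (y i b - z b)^2)"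
      by (intro mult_nonneg_nonneg mn sum_nonneg) auto
    ultimately have "0 < (\<Sum>s\<in>UNIV. m s * (\<Sum>b\<in>UNIV. (y s b - z b)^2))"
      using sum_pos2[of UNIV s1 "\<lambda>s. m s * (\<Sum>b\<in>UNIV. (y s b - z b)^2)"] by simp
    then show ?thesis using V0eq by simp
  qed
  define K where "K = AG + \<epsilon> * AH"
  have K0: "K \<ge> 0" using AG0 AH0 epos by (simp add: K_def)
  define \<rho> where "\<rho> = min (1/2) (min (\<gamma>y / 4) (\<epsilon> * V0 / (6 * K + 1)))"
  have rhopos: "\<rho> > 0" using gy epos V0pos K0 by (simp add: \<rho>_def)
  have rho12: "\<rho> \<le> 1/2" unfolding \<rho>_def by (rule min.cobounded1)
  have rhogy: "\<rho> \<le> \<gamma>y / 4" unfolding \<rho>_def by (rule min.coboundedI2, rule min.cobounded1)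
  have rhoV: "\<rho> \<le> \<epsilon> * V0 / (6 * K + 1)" unfolding \<rho>_def by (rule min.coboundedI2, rule min.cobounded2)
  define \<eta> where "\<eta> = \<rho> / (nB * (Tb + 1))"
  have etapos: "\<eta> > 0" using rhopos nB1 Tb0 by (simp add: \<eta>_def)
  have etaT: "\<eta> * Tb < \<rho> / nB"
  proof -
    have "\<eta> * Tb = (\<rho> / nB) * (Tb / (Tb + 1))" by (simp add: \<eta>_def)
    also have "\<dots> < (\<rho> / nB) * 1"
      by (rule mult_strict_left_mono) (use Tb0 rhopos nB1 in auto)
    finally show ?thesis by simp
  qed
  have etav: "\<bar>\<eta> * v s b\<bar> < \<rho> / nB" for s b
  proof -
    have "\<bar>\<eta> * v s b\<bar> = \<eta> * (\<bar>\<tau> s\<bar> * \<bar>dd b\<bar>)" using etapos by (simp add: v_def abs_mult)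
    also have "\<dots> \<le> \<eta> * Tb"
    proof -
      have "\<bar>\<tau> s\<bar> * \<bar>dd b\<bar> \<le> \<bar>\<tau> s\<bar> * 1" by (rule mult_left_mono) (auto simp: ddabs)
      then have "\<bar>\<tau> s\<bar> * \<bar>dd b\<bar> \<le> Tb" using tTb[of s] by linarith
      then show ?thesis using etapos by (simp add: mult_left_mono)
    qed
    finally show ?thesis using etaT by linarith
  qed
  define y' where "y' s b = (1 - \<rho>) * y s b + \<rho> / nB + \<eta> * v s b" for s b
  have y'pos: "y' s b > 0" for s b
  proof -
    have "(1 - \<rho>) * y s b \<ge> 0" using rho12 y0[of s b] by simp
    moreover have "\<rho> / nB + \<eta> * v s b > 0" using etav[of s b] by linarith
    ultimately show ?thesis by (simp add: y'_def)
  qed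
  have y'sum: "(\<Sum>b\<in>UNIV. y' s b) = 1" for s
  proof -
    have "(\<Sum>b\<in>UNIV. y' s b) = (1 - \<rho>) * (\<Sum>b\<in>UNIV. y s b) + nB * (\<rho> / nB) + \<eta> * \<tau> s * (\<Sum>b\<in>UNIV. dd b)"
      by (simp add: y'_def v_def sum.distrib sum_distrib_left nB_def mult.assoc)
    also have "\<dots> = 1" using nB1 by (simp add: ysum ddsum)
    finally show ?thesis .
  qed
  have y'1: "y' s b \<le> 1" for s b
  proof -
    have "y' s b \<le> (\<Sum>b\<in>UNIV. y' s b)" by (rule member_le_sum) (auto intro: less_imp_le y'pos)
    then show ?thesis by (simp add: y'sum)
  qed
  have y'strat: "is_strategy y'"
    unfolding is_strategy_def is_distr_def using y'pos y'sum by (auto intro: less_imp_le)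
  have y'gap: "gapf G \<mu> y' \<ge> 0" if mu: "\<mu> \<in> Mset m" for \<mu>
  proof -
    have "gapf G \<mu> y' = (1 - \<rho>) * gapf G \<mu> y + \<eta> * gapf G \<mu> v"
      unfolding y'_def[abs_def] by (rule gapf_lin)
    moreover have "gapf G \<mu> y \<ge> 0"
    proof -
      have "fst (Upay G \<mu> y) \<le> fst (Upay G (mu0 m) y)" using c1 mu by (simp add: C1_def)
      then show ?thesis using gap_eq[OF mu, of G y] by linarith
    qed
    ultimately show ?thesis using vgap[OF mu] rho12 etapos by simp
  qed
  have y'close: "\<bar>y' s b - y s b\<bar> \<le> 3 * \<rho>" for s b
  proof -
    have e: "y' s b - y s b = - (\<rho> * y s b) + \<rho> / nB + \<eta> * v s b" by (simp add: y'_def algebra_simps)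
    have "\<bar>\<rho> * y s b\<bar> \<le> \<rho>" using rhopos y0[of s b] yle1[of s b] by (simp add: abs_mult mult_left_le)
    moreover have "\<rho> / nB \<le> \<rho>" using rhopos nB1 by (simp add: divide_le_eq)
    moreover have "\<rho> / nB \<ge> 0" using rhopos nB1 by simp
    ultimately show ?thesis unfolding e using etav[of s b] by (simp add: abs_le_iff) linarith
  qed
  have y'inj: "s = a" if eq: "y' s = y' a" for s a
  proof (rule ccontr)
    assume sa: "s \<noteq> a"
    show False
    proof (cases "y s = y a")
      case True
      have "y' s b1 - y' a b1 = \<eta> * (\<tau> s - \<tau> a)"
        using True ddb1 by (simp add: y'_def v_def algebra_simps)
      moreover have "y' s b1 - y' a b1 = 0" using eq by simp
      ultimately have "\<tau> s = \<tau> a" using etapos by simp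
      then show False using tinj sa by (simp add: inj_eq)
    next
      case False
      then obtain b where b: "y s b \<noteq> y a b" by auto
      have g: "\<gamma>y \<le> \<bar>y s b - y a b\<bar>" using gyb'[OF b] .
      have "y' s b - y' a b = (1 - \<rho>) * (y s b - y a b) + (\<eta> * v s b - \<eta> * v a b)"
        by (simp add: y'_def algebra_simps)
      moreover have "y' s b - y' a b = 0" using eq by simp
      ultimately have e: "(1 - \<rho>) * (y s b - y a b) = - (\<eta> * v s b - \<eta> * v a b)" by linarith
      have "\<bar>\<eta> * v s b - \<eta> * v a b\<bar> < 2 * (\<rho> / nB)" using etav[of s b] etav[of a b] by linarith
      also have "\<dots> \<le> 2 * \<rho>" using rhopos nB1 by (simp add: divide_le_eq)
      also have "\<dots> \<le> \<gamma>y / 2" using rhogy by simp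
      also have "\<dots> \<le> (1 - \<rho>) * \<gamma>y"
      proof -
        have "1/2 \<le> 1 - \<rho>" using rho12 by simp
        then have "(1/2) * \<gamma>y \<le> (1 - \<rho>) * \<gamma>y" by (rule mult_right_mono) (use gy in simp)
        then show ?thesis by simp
      qed
      also have "\<dots> \<le> (1 - \<rho>) * \<bar>y s b - y a b\<bar>" using g rho12 by (simp add: mult_left_mono)
      also have "\<dots> = \<bar>(1 - \<rho>) * (y s b - y a b)\<bar>" using rho12 by (simp add: abs_mult)
      finally show False unfolding e by simp
    qed
  qed
  define G' :: "('s,'b) game" where "G' s b = G s b + (\<epsilon> * y' s b, \<epsilon> * (y s b - z b))" for s b
  have G'N: "G' \<in> N"
  proof (rule rN, intro allI conjI)
    fix s b
    have "\<bar>fst (G' s b) - fst (G s b)\<bar> = \<epsilon> * y' s b" using epos y'pos[of s b] by (simp add: G'_def abs_mult)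
    also have "\<dots> \<le> \<epsilon>" using y'1[of s b] epos by (simp add: mult_left_le)
    also have "\<dots> < r" using rpos by (simp add: \<epsilon>_def)
    finally show "\<bar>fst (G' s b) - fst (G s b)\<bar> < r" .
    have "\<bar>y s b - z b\<bar> \<le> 1" using y0[of s b] yle1[of s b] z0[of b] z1[of b] by (simp add: abs_le_iff)
    then have "\<bar>snd (G' s b) - snd (G s b)\<bar> \<le> \<epsilon>" using epos by (simp add: G'_def abs_mult mult_left_le)
    also have "\<dots> < r" using rpos by (simp add: \<epsilon>_def)
    finally show "\<bar>snd (G' s b) - snd (G s b)\<bar> < r" .
  qed
  have G'eq: "G' = (\<lambda>s b. G s b + (\<epsilon> * y' s b, \<epsilon> * (y s b - z b)))" by (simp add: G'_def[abs_def])
  have D1: "D1 G' m y'"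
    unfolding D1_def
  proof (intro ballI impI)
    fix \<mu> assume mu: "\<mu> \<in> Mset m" and ne: "\<mu> \<noteq> mu0 m"
    define QQ where "QQ b = (\<Sum>s\<in>UNIV. \<Sum>a\<in>UNIV. \<mu> s a * ((y' s b - y' a b) * y' s b))" for b
    have QQeq: "QQ b = (\<Sum>s\<in>UNIV. \<Sum>a\<in>UNIV. \<mu> s a * (y' s b - y' a b)^2) / 2" for b
      unfolding QQ_def by (rule quad_identity[OF mu])
    have mu0': "\<mu> s a \<ge> 0" for s a using mu by (simp add: Mset_def)
    have QQ0: "QQ b \<ge> 0" for b unfolding QQeq by (intro divide_nonneg_pos sum_nonneg mult_nonneg_nonneg mu0') auto
    obtain s1 a1 where sa1: "s1 \<noteq> a1" "\<mu> s1 a1 > 0" using offdiag[OF mu ne] by blast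
    have "y' s1 \<noteq> y' a1" using y'inj sa1(1) by blast
    then obtain b' where b': "y' s1 b' \<noteq> y' a1 b'" by auto
    have "0 < (\<Sum>a\<in>UNIV. \<mu> s1 a * (y' s1 b' - y' a b')^2)"
      by (rule sum_pos2[of UNIV a1]) (use sa1 b' mu0' in auto)
    moreover have "\<And>i. i \<in> UNIV \<Longrightarrow> 0 \<le> (\<Sum>a\<in>UNIV. \<mu> i a * (y' i b' - y' a b')^2)"
      by (intro sum_nonneg mult_nonneg_nonneg mu0') auto
    ultimately have "0 < (\<Sum>s\<in>UNIV. \<Sum>a\<in>UNIV. \<mu> s a * (y' s b' - y' a b')^2)"
      using sum_pos2[of UNIV s1 "\<lambda>s. \<Sum>a\<in>UNIV. \<mu> s a * (y' s b' - y' a b')^2"] by simp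
    then have QQpos: "QQ b' > 0" unfolding QQeq by simp
    have Qsum: "0 < (\<Sum>b\<in>UNIV. QQ b)"
      by (rule sum_pos2[of UNIV b']) (use QQpos QQ0 in auto)
    have "(\<Sum>s\<in>UNIV. \<Sum>a\<in>UNIV. \<mu> s a * (\<Sum>b\<in>UNIV. (y' s b - y' a b) * (\<epsilon> * y' s b)))
        = (\<Sum>s\<in>UNIV. \<Sum>a\<in>UNIV. \<Sum>b\<in>UNIV. \<epsilon> * (\<mu> s a * ((y' s b - y' a b) * y' s b)))"
      by (simp add: sum_distrib_left mult_ac)
    also have "\<dots> = (\<Sum>s\<in>UNIV. \<Sum>b\<in>UNIV. \<Sum>a\<in>UNIV. \<epsilon> * (\<mu> s a * ((y' s b - y' a b) * y' s b)))"
      by (rule sum.cong[OF refl], rule sum.swap)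
    also have "\<dots> = (\<Sum>b\<in>UNIV. \<Sum>s\<in>UNIV. \<Sum>a\<in>UNIV. \<epsilon> * (\<mu> s a * ((y' s b - y' a b) * y' s b)))"
      by (rule sum.swap)
    also have "\<dots> = \<epsilon> * (\<Sum>b\<in>UNIV. QQ b)"
      by (simp add: QQ_def sum_distrib_left)
    finally have Qe: "(\<Sum>s\<in>UNIV. \<Sum>a\<in>UNIV. \<mu> s a * (\<Sum>b\<in>UNIV. (y' s b - y' a b) * (\<epsilon> * y' s b))) = \<epsilon> * (\<Sum>b\<in>UNIV. QQ b)" .
    have "gapf G' \<mu> y' = gapf G \<mu> y' + \<epsilon> * (\<Sum>b\<in>UNIV. QQ b)"
      unfolding G'eq gapf_addgame Qe ..
    moreover have "\<epsilon> * (\<Sum>b\<in>UNIV. QQ b) > 0" using epos Qsum by simp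
    ultimately have "gapf G' \<mu> y' > 0" using y'gap[OF mu] by linarith
    then show "fst (Upay G' \<mu> y') < fst (Upay G' (mu0 m) y')" using gap_eq[OF mu, of G' y'] by linarith
  qed
  define H :: "('s,'b) game" where "H s b = (0, y s b - z b)" for s b
  have D2: "D2 G' m y'"
  proof -
    have weq: "wpay G' m = wpay G m"
    proof
      fix b
      have "(\<Sum>s\<in>UNIV. m s * (\<epsilon> * (y s b - z b))) = \<epsilon> * (\<Sum>s\<in>UNIV. m s * (y s b - z b))"
        by (simp add: sum_distrib_left mult_ac)
      also have "(\<Sum>s\<in>UNIV. m s * (y s b - z b)) = 0"
        by (simp add: right_diff_distrib sum_subtractf z_def sum_distrib_right[symmetric] msum)
      finally show "wpay G' m b = wpay G m b" unfolding G'eq wpay_addgame by simp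
    qed
    have v2eq: "v2 G' m = v2 G m" by (simp add: v2_eq weq)
    have cG: "c2f G m y' \<ge> v2 G m - 3 * \<rho> * AG"
    proof -
      have "c2f G m y - 3 * \<rho> * AG \<le> c2f G m y'"
        using c2f_close[OF mn y'close, of G] unfolding AG_def by simp
      moreover have "c2f G m y \<ge> v2 G m" using c2 by (simp add: C2_def snd_Upay_mu0)
      ultimately show ?thesis by linarith
    qed
    have cH: "c2f H m y' \<ge> V0 - 3 * \<rho> * AH"
    proof -
      have "c2f H m y - 3 * \<rho> * (\<Sum>s\<in>UNIV. m s * (\<Sum>b\<in>UNIV. \<bar>snd (H s b)\<bar>)) \<le> c2f H m y'"
        by (rule c2f_close[OF mn y'close])
      moreover have "c2f H m y = V0" by (simp add: c2f_def H_def V0_def)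
      moreover have "(\<Sum>s\<in>UNIV. m s * (\<Sum>b\<in>UNIV. \<bar>snd (H s b)\<bar>)) = AH" by (simp add: H_def AH_def)
      ultimately show ?thesis by simp
    qed
    have "c2f G' m y' = c2f G m y' + \<epsilon> * c2f H m y'"
      unfolding G'eq c2f_addgame by (simp add: c2f_def H_def sum_distrib_left mult_ac)
    moreover have "3 * \<rho> * K < \<epsilon> * V0"
    proof -
      have "\<rho> * (6 * K + 1) \<le> \<epsilon> * V0" using rhoV pos_le_divide_eq[of "6 * K + 1" \<rho> "\<epsilon> * V0"] K0 by simp
      moreover have "\<rho> * (6 * K + 1) - 3 * \<rho> * K = \<rho> * (3 * K + 1)" by (simp add: algebra_simps)
      moreover have "\<rho> * (3 * K + 1) > 0" using rhopos K0 by simp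
      ultimately show ?thesis by linarith
    qed
    ultimately have "c2f G' m y' > v2 G m"
    proof -
      have "\<epsilon> * (V0 - 3 * \<rho> * AH) \<le> \<epsilon> * c2f H m y'" using cH epos by (simp add: mult_left_mono)
      moreover have "\<epsilon> * (V0 - 3 * \<rho> * AH) = \<epsilon> * V0 - 3 * \<rho> * (\<epsilon> * AH)" by (simp add: algebra_simps)
      moreover have "3 * \<rho> * K = 3 * \<rho> * AG + 3 * \<rho> * (\<epsilon> * AH)" by (simp add: K_def algebra_simps)
      ultimately show ?thesis using cG \<open>c2f G' m y' = c2f G m y' + \<epsilon> * c2f H m y'\<close> \<open>3 * \<rho> * K < \<epsilon> * V0\<close> by linarith
    qed
    then show ?thesis by (simp add: D2_def snd_Upay_mu0 v2eq)
  qed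
  have "Upay G' (mu0 m) y' \<in> Ehat G' m"
    unfolding Ehat_def using y'strat D1 D2 by blast
  then show ?thesis using G'N by blast
qed

theorem theorem3:
  fixes p :: "'s::finite \<Rightarrow> 's \<Rightarrow> real"
    and m :: "'s \<Rightarrow> real"
    and G :: "('s, 'b::finite) game"
  assumes "stochastic p"
    and "irreducible_chain p"
    and "aperiodic_chain p"
    and "invariant_measure p m"
  shows "(conditionB G m \<longrightarrow>
            (\<forall>N. open N \<and> G \<in> N \<longrightarrow> (\<exists>G'\<in>N. Ehat G' m \<noteq> {})))
       \<and> (\<not> conditionB G m \<longrightarrow>
            (\<exists>N. open N \<and> G \<in> N \<and> (\<forall>G'\<in>N. \<not> conditionB G' m)))"
proof (intro conjI impI allI)
  have mpos: "\<And>s. m s > 0" using m_pos[OF assms(1,2,4)] .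
  have mn: "\<And>s. m s \<ge> 0" using mpos less_imp_le by blast
  have msum: "(\<Sum>s\<in>UNIV. m s) = 1" using assms(4) by (simp add: invariant_measure_def is_distr_def)
  fix N
  assume "conditionB G m" and "open N \<and> G \<in> N"
  then show "\<exists>G'\<in>N. Ehat G' m \<noteq> {}" using parti[OF mpos msum] by blast
next
  have mpos: "\<And>s. m s > 0" using m_pos[OF assms(1,2,4)] .
  have mn: "\<And>s. m s \<ge> 0" using mpos less_imp_le by blast
  have msum: "(\<Sum>s\<in>UNIV. m s) = 1" using assms(4) by (simp add: invariant_measure_def is_distr_def)
  assume "\<not> conditionB G m"
  then show "\<exists>N. open N \<and> G \<in> N \<and> (\<forall>G'\<in>N. \<not> conditionB G' m)" using partii[OF mn msum] by blast
qed

end
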